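(* The twelve 2-tangles $[\infty],[0],[-1],[1],[-2],[2],[\frac25],[\frac52],[\frac32],[-\frac32],[\frac12],[-\frac12]$ lie in pairwise different $5$-move equivalence classes.
   Context: 2-tangles are considered in a ball with four boundary points, up to isotopy fixing the boundary; $[\frac pq]$ is Conway's rational tangle with fraction $p/q$ ($[0]$ two horizontal arcs, $[\infty]$ two vertical arcs, $[n]$ $|n|$ horizontal half-twists, $[\frac1n]$ $|n|$ vertical half-twists). A $5$-move replaces a sub-tangle $[0]$ (inside a ball meeting the tangle in two arcs) by the tangle $[5]$ of five half-twists; $5$-move equivalence is generated by isotopy rel boundary and $5$-moves and their inverses. *)

theory Defs
  imports Main
begin

text \<open>Unoriented tangle diagrams as morphisms of the (strict monoidal) tangle category,
  generated by cups, caps and the two crossings.  A morphism m -> n has m bottom endpoints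
  and n top endpoints (left to right); diagrams are read bottom to top.
  Cmp S T means: first S, then T on top of it.  Ten S T places S to the left of T.
  Pos: the strand from bottom-left to top-right passes OVER.
  Neg: the strand from bottom-left to top-right passes UNDER.\<close>

datatype tg = Id nat | Cup | Cap | Pos | Neg | Cmp tg tg | Ten tg tg

fun dom :: "tg \<Rightarrow> nat" and cod :: "tg \<Rightarrow> nat" where
  "dom (Id n) = n" | "cod (Id n) = n"
| "dom Cup = 0" | "cod Cup = 2"
| "dom Cap = 2" | "cod Cap = 0"
| "dom Pos = 2" | "cod Pos = 2"
| "dom Neg = 2" | "cod Neg = 2"
| "dom (Cmp S T) = dom S" | "cod (Cmp S T) = cod T"
| "dom (Ten S T) = dom S + dom T" | "cod (Ten S T) = cod S + cod T"

fun wt :: "tg \<Rightarrow> bool" where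
  "wt (Cmp S T) = (wt S \<and> wt T \<and> cod S = dom T)"
| "wt (Ten S T) = (wt S \<and> wt T)"
| "wt _ = True"

text \<open>Equivalence of tangle diagrams generated by isotopy (Turaev's presentation of the
  unoriented, unframed tangle category) together with an extra set R of local moves
  (pairs of well-typed diagrams with equal source and target), closed under composition,
  tensor, symmetry and transitivity.  Isotopy rel boundary is tg_rel {}.\<close>

inductive tg_rel :: "(tg \<times> tg) set \<Rightarrow> tg \<Rightarrow> tg \<Rightarrow> bool" for R where
  refl: "wt T \<Longrightarrow> tg_rel R T T"
| sym: "tg_rel R S T \<Longrightarrow> tg_rel R T S"
| trans: "tg_rel R S T \<Longrightarrow> tg_rel R T U \<Longrightarrow> tg_rel R S U"
| cong_cmp: "tg_rel R S S' \<Longrightarrow> tg_rel R T T' \<Longrightarrow> cod S = dom T \<Longrightarrow>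
     tg_rel R (Cmp S T) (Cmp S' T')"
| cong_ten: "tg_rel R S S' \<Longrightarrow> tg_rel R T T' \<Longrightarrow> tg_rel R (Ten S T) (Ten S' T')"
| move: "(S, T) \<in> R \<Longrightarrow> wt S \<Longrightarrow> wt T \<Longrightarrow> dom S = dom T \<Longrightarrow> cod S = cod T \<Longrightarrow>
     tg_rel R S T"
| id_left: "wt T \<Longrightarrow> tg_rel R (Cmp (Id (dom T)) T) T"
| id_right: "wt T \<Longrightarrow> tg_rel R (Cmp T (Id (cod T))) T"
| cmp_assoc: "wt S \<Longrightarrow> wt T \<Longrightarrow> wt U \<Longrightarrow> cod S = dom T \<Longrightarrow> cod T = dom U \<Longrightarrow>
     tg_rel R (Cmp (Cmp S T) U) (Cmp S (Cmp T U))"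
| ten_unit_left: "wt T \<Longrightarrow> tg_rel R (Ten (Id 0) T) T"
| ten_unit_right: "wt T \<Longrightarrow> tg_rel R (Ten T (Id 0)) T"
| ten_assoc: "wt S \<Longrightarrow> wt T \<Longrightarrow> wt U \<Longrightarrow> tg_rel R (Ten (Ten S T) U) (Ten S (Ten T U))"
| ten_id: "tg_rel R (Ten (Id m) (Id n)) (Id (m + n))"
| interchange: "wt A \<Longrightarrow> wt B \<Longrightarrow> wt C \<Longrightarrow> wt D \<Longrightarrow> cod A = dom B \<Longrightarrow> cod C = dom D \<Longrightarrow>
     tg_rel R (Ten (Cmp A B) (Cmp C D)) (Cmp (Ten A C) (Ten B D))"
| snake1: "tg_rel R (Cmp (Ten (Id 1) Cup) (Ten Cap (Id 1))) (Id 1)"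
| snake2: "tg_rel R (Cmp (Ten Cup (Id 1)) (Ten (Id 1) Cap)) (Id 1)"
  (* Reidemeister I (unframed) *)
| r1_cup_pos: "tg_rel R (Cmp Cup Pos) Cup"
| r1_cup_neg: "tg_rel R (Cmp Cup Neg) Cup"
| r1_cap_pos: "tg_rel R (Cmp Pos Cap) Cap"
| r1_cap_neg: "tg_rel R (Cmp Neg Cap) Cap"
| r2a: "tg_rel R (Cmp Pos Neg) (Id 2)"
| r2b: "tg_rel R (Cmp Neg Pos) (Id 2)"
| r3_pos: "tg_rel R (Cmp (Cmp (Ten Pos (Id 1)) (Ten (Id 1) Pos)) (Ten Pos (Id 1)))
                    (Cmp (Cmp (Ten (Id 1) Pos) (Ten Pos (Id 1))) (Ten (Id 1) Pos))"
| r3_neg: "tg_rel R (Cmp (Cmp (Ten Neg (Id 1)) (Ten (Id 1) Neg)) (Ten Neg (Id 1)))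
                    (Cmp (Cmp (Ten (Id 1) Neg) (Ten Neg (Id 1))) (Ten (Id 1) Neg))"
| slide_cup_pos: "tg_rel R (Cmp (Ten Cup (Id 1)) (Ten (Id 1) Pos)) (Cmp (Ten (Id 1) Cup) (Ten Neg (Id 1)))"
| slide_cup_neg: "tg_rel R (Cmp (Ten Cup (Id 1)) (Ten (Id 1) Neg)) (Cmp (Ten (Id 1) Cup) (Ten Pos (Id 1)))"
| slide_cap_pos: "tg_rel R (Cmp (Ten (Id 1) Pos) (Ten Cap (Id 1))) (Cmp (Ten Neg (Id 1)) (Ten (Id 1) Cap))"
| slide_cap_neg: "tg_rel R (Cmp (Ten (Id 1) Neg) (Ten Cap (Id 1))) (Cmp (Ten Pos (Id 1)) (Ten (Id 1) Cap))"
| rot_pos: "tg_rel R (Cmp (Cmp (Ten Cup (Id 2)) (Ten (Id 1) (Ten Pos (Id 1)))) (Ten (Id 2) Cap)) Neg"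
| rot_neg: "tg_rel R (Cmp (Cmp (Ten Cup (Id 2)) (Ten (Id 1) (Ten Neg (Id 1)))) (Ten (Id 2) Cap)) Pos"

text \<open>2-tangles: 2 bottom endpoints (SW, SE) and 2 top endpoints (NW, NE).
  Conway sum (S to the left of T, S's east endpoints joined to T's west endpoints)
  and Conway product (S below T, S's north endpoints joined to T's south endpoints).\<close>

definition tsum :: "tg \<Rightarrow> tg \<Rightarrow> tg" where
  "tsum S T = Cmp (Cmp (Ten (Id 1) (Ten Cup (Id 1))) (Ten S T)) (Ten (Id 1) (Ten Cap (Id 1)))"

definition tprod :: "tg \<Rightarrow> tg \<Rightarrow> tg" where
  "tprod S T = Cmp S T"

text \<open>Conway's rational tangles needed (the crossing Pos plays the role of [1]).\<close>
definition "rt_inf = Id 2"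
definition "rt_0 = Cmp Cap Cup"
definition "rt_1 = Pos"
definition "rt_m1 = Neg"
definition "rt_2 = tsum Pos Pos"
definition "rt_m2 = tsum Neg Neg"
definition "rt_1_2 = tprod Pos Pos"
definition "rt_m1_2 = tprod Neg Neg"
definition "rt_3_2 = tsum rt_1_2 Pos"           (* 1/2 + 1 = 3/2 *)
definition "rt_m3_2 = tsum rt_m1_2 Neg"
definition "rt_5_2 = tsum rt_1_2 rt_2"          (* 1/2 + 2 = 5/2 *)
definition "rt_2_5 = tprod (tprod rt_2 Pos) Pos" (* 1/(1/2+1+1) = 2/5 *)
definition "rt_5 = tsum Pos (tsum Pos (tsum Pos (tsum Pos Pos)))"

definition five_equiv :: "tg \<Rightarrow> tg \<Rightarrow> bool" where
  "five_equiv = tg_rel {(rt_0, rt_5)}"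

end

theory Submission imports Defs begin

fun bls :: "nat \<Rightarrow> bool list list" where
  "bls 0 = [[]]"
| "bls (Suc n) = map (Cons False) (bls n) @ map (Cons True) (bls n)"

lemma set_bls: "set (bls n) = {xs. length xs = n}"
proof (induction n)
  case 0 then show ?case by auto
next
  case (Suc n)
  show ?case
  proof
    show "set (bls (Suc n)) \<subseteq> {xs. length xs = Suc n}" using Suc by auto
    show "{xs. length xs = Suc n} \<subseteq> set (bls (Suc n))"
    proof
      fix xs :: "bool list" assume "xs \<in> {xs. length xs = Suc n}"
      then obtain b ys where "xs = b # ys" "length ys = n" by (cases xs) auto
      then show "xs \<in> set (bls (Suc n))" using Suc by (cases b) auto
    qed
  qed
qed

lemma distinct_bls: "distinct (bls n)"
  by (induction n) (auto simp: distinct_map)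

lemma fin_bl: "finite {xs::bool list. length xs = n}"
  by (metis set_bls List.finite_set)

lemma sum_list_bls: "sum_list (map f (bls n)) = (\<Sum>y\<in>{xs. length xs = n}. f y)"
  by (simp add: sum_list_distinct_conv_sum_set distinct_bls set_bls)

definition cv :: "bool list \<Rightarrow> int" where
  "cv x = (if x = [False,True] then 13 else if x = [True,False] then -22 else 0)"

fun sem :: "tg \<Rightarrow> bool list \<Rightarrow> bool list \<Rightarrow> int" where
  "sem (Id n) x z = (if x = z then 1 else 0)"
| "sem Cup x z = cv z"
| "sem Cap x z = cv x"
| "sem Pos x z = (if x = z then 6 else 0) + 7 * cv x * cv z"
| "sem Neg x z = (if x = z then 7 else 0) + 6 * cv x * cv z"
| "sem (Cmp S T) x z = sum_list (map (\<lambda>y. sem S x y * sem T y z) (bls (cod S)))"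
| "sem (Ten S T) x z = sem S (take (dom S) x) (take (cod S) z) * sem T (drop (dom S) x) (drop (cod S) z)"

lemma sem_cmp: "sem (Cmp S T) x z = (\<Sum>y\<in>{xs. length xs = cod S}. sem S x y * sem T y z)"
  by (simp add: sum_list_bls)

declare sem.simps(6)[simp del]

fun sumo :: "bool list list \<Rightarrow> (bool list \<Rightarrow> int) \<Rightarrow> int" where
  "sumo [] f = 0" | "sumo (y # ys) f = f y + sumo ys f"

lemma sumo_cong[cong]: "xs = ys \<Longrightarrow> sumo xs f = sumo ys f" by simp

lemma sumo_eq: "sumo xs f = sum_list (map f xs)" by (induction xs) auto

lemma sem_cmp_ev: "sem (Cmp S T) x z = sumo (bls (cod S)) (\<lambda>y. sem S x y * sem T y z)"
  by (simp add: sumo_eq sem.simps(6))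

lemma bl0: "bls 0 = [[]]" by simp
lemma bl1: "bls 1 = [[False],[True]]" by (simp add: numeral_eq_Suc)
lemma bl2: "bls 2 = [[False,False],[False,True],[True,False],[True,True]]"
  by (simp add: numeral_eq_Suc)
lemma bl4: "bls 4 = map (Cons False) (bls 3) @ map (Cons True) (bls 3)" by (simp add: numeral_eq_Suc)
lemma bl3: "bls 3 = [[False,False,False],[False,False,True],[False,True,False],[False,True,True],[True,False,False],[True,False,True],[True,True,False],[True,True,True]]"
  by (simp add: numeral_eq_Suc)

definition meq :: "nat \<Rightarrow> nat \<Rightarrow> (bool list \<Rightarrow> bool list \<Rightarrow> int) \<Rightarrow> (bool list \<Rightarrow> bool list \<Rightarrow> int) \<Rightarrow> bool" where
  "meq m n M N \<longleftrightarrow> (\<exists>c d. (c * d) mod 41 = 1 \<and>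
      (\<forall>x z. length x = m \<longrightarrow> length z = n \<longrightarrow> M x z mod 41 = (c * N x z) mod 41))"

lemma meq_exact: "(\<And>x z. length x = m \<Longrightarrow> length z = n \<Longrightarrow> M x z = N x z) \<Longrightarrow> meq m n M N"
  unfolding meq_def by (rule exI[of _ 1], rule exI[of _ 1]) auto

lemma meq_refl: "meq m n M M" by (rule meq_exact) auto

lemma mcong: "a mod (41::int) = b mod 41 \<Longrightarrow> (c * a) mod 41 = (c * b) mod 41"
  by (metis mod_mult_right_eq)

lemma meq_sym: assumes "meq m n M N" shows "meq m n N M"
proof -
  obtain c d where cd: "(c * d) mod 41 = 1" and h: "\<forall>x z. length x = m \<longrightarrow> length z = n \<longrightarrow> M x z mod 41 = (c * N x z) mod 41"
    using assms unfolding meq_def by blast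
  have "N x z mod 41 = (d * M x z) mod 41" if "length x = m" "length z = n" for x z
  proof -
    have "(d * M x z) mod 41 = (d * (c * N x z)) mod 41" using h that mcong by blast
    also have "\<dots> = ((c * d) * N x z) mod 41" by (simp add: ac_simps)
    also have "\<dots> = (((c * d) mod 41) * N x z) mod 41" by (simp add: mod_mult_left_eq)
    finally show ?thesis using cd by simp
  qed
  moreover have "(d * c) mod 41 = 1" using cd by (simp add: ac_simps)
  ultimately show ?thesis unfolding meq_def by blast
qed

lemma meq_trans: assumes "meq m n M N" "meq m n N P" shows "meq m n M P"
proof -
  obtain c d where cd: "(c * d) mod 41 = 1" and h: "\<forall>x z. length x = m \<longrightarrow> length z = n \<longrightarrow> M x z mod 41 = (c * N x z) mod 41"
    using assms(1) unfolding meq_def by blast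
  obtain c' d' where cd': "(c' * d') mod 41 = 1" and h': "\<forall>x z. length x = m \<longrightarrow> length z = n \<longrightarrow> N x z mod 41 = (c' * P x z) mod 41"
    using assms(2) unfolding meq_def by blast
  have "M x z mod 41 = ((c * c') * P x z) mod 41" if "length x = m" "length z = n" for x z
  proof -
    have "M x z mod 41 = (c * N x z) mod 41" using h that by blast
    also have "\<dots> = (c * (c' * P x z)) mod 41" using h' that mcong by blast
    finally show ?thesis by (simp add: ac_simps)
  qed
  moreover have "((c * c') * (d * d')) mod 41 = 1"
  proof -
    have "((c * c') * (d * d')) mod 41 = (((c * d) mod 41) * ((c' * d') mod 41)) mod 41"
      by (simp add: mod_mult_eq ac_simps)
    then show ?thesis using cd cd' by simp
  qed
  ultimately show ?thesis unfolding meq_def by blast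
qed

lemma sum_mod_cong: "(\<And>i. i \<in> A \<Longrightarrow> f i mod (41::int) = g i mod 41) \<Longrightarrow> sum f A mod 41 = sum g A mod 41"
  by (metis (mono_tags, lifting) mod_sum_eq sum.cong)

lemma mult_mod_cong: "a mod (41::int) = a' mod 41 \<Longrightarrow> b mod 41 = b' mod 41 \<Longrightarrow> (a * b) mod 41 = (a' * b') mod 41"
  by (metis mod_mult_eq)

lemma meq_cmp: assumes "meq a b M M'" "meq b c N N'"
  shows "meq a c (\<lambda>x z. \<Sum>y\<in>{xs. length xs = b}. M x y * N y z) (\<lambda>x z. \<Sum>y\<in>{xs. length xs = b}. M' x y * N' y z)"
proof -
  obtain c1 d1 where cd: "(c1 * d1) mod 41 = 1" and h: "\<forall>x z. length x = a \<longrightarrow> length z = b \<longrightarrow> M x z mod 41 = (c1 * M' x z) mod 41"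
    using assms(1) unfolding meq_def by blast
  obtain c2 d2 where cd': "(c2 * d2) mod 41 = 1" and h': "\<forall>x z. length x = b \<longrightarrow> length z = c \<longrightarrow> N x z mod 41 = (c2 * N' x z) mod 41"
    using assms(2) unfolding meq_def by blast
  have "(\<Sum>y\<in>{xs. length xs = b}. M x y * N y z) mod 41 = ((c1 * c2) * (\<Sum>y\<in>{xs. length xs = b}. M' x y * N' y z)) mod 41"
    if "length x = a" "length z = c" for x z
  proof -
    have "(\<Sum>y\<in>{xs. length xs = b}. M x y * N y z) mod 41 = (\<Sum>y\<in>{xs. length xs = b}. (c1 * M' x y) * (c2 * N' y z)) mod 41"
      by (rule sum_mod_cong, rule mult_mod_cong) (use h h' that in auto)
    also have "\<dots> = ((c1 * c2) * (\<Sum>y\<in>{xs. length xs = b}. M' x y * N' y z)) mod 41"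
      by (simp add: sum_distrib_left ac_simps)
    finally show ?thesis .
  qed
  moreover have "((c1 * c2) * (d1 * d2)) mod 41 = 1"
  proof -
    have "((c1 * c2) * (d1 * d2)) mod 41 = (((c1 * d1) mod 41) * ((c2 * d2) mod 41)) mod 41"
      by (simp add: mod_mult_eq ac_simps)
    then show ?thesis using cd cd' by simp
  qed
  ultimately show ?thesis unfolding meq_def by blast
qed

lemma meq_ten: assumes "meq a b M M'" "meq c d N N'"
  shows "meq (a + c) (b + d) (\<lambda>x z. M (take a x) (take b z) * N (drop a x) (drop b z))
                             (\<lambda>x z. M' (take a x) (take b z) * N' (drop a x) (drop b z))"
proof -
  obtain c1 d1 where cd: "(c1 * d1) mod 41 = 1" and h: "\<forall>x z. length x = a \<longrightarrow> length z = b \<longrightarrow> M x z mod 41 = (c1 * M' x z) mod 41"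
    using assms(1) unfolding meq_def by blast
  obtain c2 d2 where cd': "(c2 * d2) mod 41 = 1" and h': "\<forall>x z. length x = c \<longrightarrow> length z = d \<longrightarrow> N x z mod 41 = (c2 * N' x z) mod 41"
    using assms(2) unfolding meq_def by blast
  have "(M (take a x) (take b z) * N (drop a x) (drop b z)) mod 41 = ((c1 * c2) * (M' (take a x) (take b z) * N' (drop a x) (drop b z))) mod 41"
    if "length x = a + c" "length z = b + d" for x z
  proof -
    have "(M (take a x) (take b z) * N (drop a x) (drop b z)) mod 41 = ((c1 * M' (take a x) (take b z)) * (c2 * N' (drop a x) (drop b z))) mod 41"
      by (rule mult_mod_cong) (use h h' that in auto)
    then show ?thesis by (simp add: ac_simps)
  qed
  moreover have "((c1 * c2) * (d1 * d2)) mod 41 = 1"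
  proof -
    have "((c1 * c2) * (d1 * d2)) mod 41 = (((c1 * d1) mod 41) * ((c2 * d2) mod 41)) mod 41"
      by (simp add: mod_mult_eq ac_simps)
    then show ?thesis using cd cd' by simp
  qed
  ultimately show ?thesis unfolding meq_def by blast
qed

lemma meq_check: "(c * d) mod 41 = 1 \<Longrightarrow> \<forall>x\<in>set (bls m). \<forall>z\<in>set (bls n). M x z mod 41 = (c * N x z) mod 41 \<Longrightarrow> meq m n M N"
  unfolding meq_def set_bls by blast

lemma tg_rel_wt: "tg_rel R S T \<Longrightarrow> wt S \<and> wt T \<and> dom S = dom T \<and> cod S = cod T"
  by (induction rule: tg_rel.induct) auto

lemma sum_split: "(\<Sum>w\<in>{w::bool list. length w = k + l}. g w) =
   (\<Sum>y\<in>{y. length y = k}. \<Sum>y'\<in>{y'. length y' = l}. g (y @ y'))"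
proof -
  have bij: "bij_betw (\<lambda>p. fst p @ snd p) ({y::bool list. length y = k} \<times> {y'. length y' = l}) {w. length w = k + l}"
  proof (rule bij_betwI')
    fix p q :: "bool list \<times> bool list"
    assume "p \<in> {y. length y = k} \<times> {y'. length y' = l}" "q \<in> {y. length y = k} \<times> {y'. length y' = l}"
    then show "(fst p @ snd p = fst q @ snd q) = (p = q)"
      by (cases p, cases q) auto
  next
    fix p :: "bool list \<times> bool list"
    assume "p \<in> {y. length y = k} \<times> {y'. length y' = l}"
    then show "fst p @ snd p \<in> {w. length w = k + l}" by auto
  next
    fix w :: "bool list" assume "w \<in> {w. length w = k + l}"
    then show "\<exists>p\<in>{y. length y = k} \<times> {y'. length y' = l}. w = fst p @ snd p"
      by (intro bexI[of _ "(take k w, drop k w)"]) auto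
  qed
  have "(\<Sum>y\<in>{y. length y = k}. \<Sum>y'\<in>{y'. length y' = l}. g (y @ y')) =
        (\<Sum>p\<in>{y::bool list. length y = k} \<times> {y'. length y' = l}. g (fst p @ snd p))"
    by (simp add: sum.cartesian_product split_def)
  also have "\<dots> = (\<Sum>w\<in>{w. length w = k + l}. g w)"
    by (rule sum.reindex_bij_betw[OF bij])
  finally show ?thesis by simp
qed

lemma take_drop_eq: "(x = z) \<longleftrightarrow> (take m x = take m z \<and> drop m x = drop m z)"
  by (metis append_take_drop_id)


lemma tsum_ev:
  assumes "dom S = 2" "cod S = 2" "dom T = 2" "cod T = 2"
  shows "sem (tsum S T) [a,b] [c,d] =
     169 * sem S [a,False] [c,False] * sem T [True,b] [True,d]
   - 286 * sem S [a,False] [c,True] * sem T [True,b] [False,d]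
   - 286 * sem S [a,True] [c,False] * sem T [False,b] [True,d]
   + 484 * sem S [a,True] [c,True] * sem T [False,b] [False,d]"
  using assms by (cases a; cases b; cases c; cases d) (simp_all add: tsum_def sem_cmp_ev bl0 bl1 bl2 bl3 bl4 cv_def algebra_simps)
lemma s_id_left: "meq (dom T) (cod T) (sem (Cmp (Id (dom T)) T)) (sem T)"
proof (rule meq_exact)
  fix x z :: "bool list" assume "length x = dom T"
  have "sem (Cmp (Id (dom T)) T) x z = (\<Sum>y\<in>{xs. length xs = dom T}. if x = y then sem T y z else 0)"
    unfolding sem_cmp by (rule sum.cong) auto
  also have "\<dots> = sem T x z" using \<open>length x = dom T\<close> by (simp add: fin_bl sum.delta)
  finally show "sem (Cmp (Id (dom T)) T) x z = sem T x z" .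
qed

lemma s_id_right: "meq (dom T) (cod T) (sem (Cmp T (Id (cod T)))) (sem T)"
  by (rule meq_exact) (simp add: sem_cmp fin_bl if_distrib sum.delta' cong: if_cong)

lemma s_assoc: "meq (dom S) (cod U) (sem (Cmp (Cmp S T) U)) (sem (Cmp S (Cmp T U)))"
proof (rule meq_exact)
  fix x z
  show "sem (Cmp (Cmp S T) U) x z = sem (Cmp S (Cmp T U)) x z"
    by (simp add: sem_cmp sum_distrib_left sum_distrib_right mult.assoc sum.swap[of _ "{xs. length xs = cod S}"])
qed

lemma s_unit_left: "meq (dom (Ten (Id 0) T)) (cod (Ten (Id 0) T)) (sem (Ten (Id 0) T)) (sem T)"
  by (rule meq_exact) simp

lemma s_unit_right: "meq (dom (Ten T (Id 0))) (cod (Ten T (Id 0))) (sem (Ten T (Id 0))) (sem T)"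
  by (rule meq_exact) simp

lemma s_ten_assoc: "meq (dom (Ten (Ten S T) U)) (cod (Ten (Ten S T) U)) (sem (Ten (Ten S T) U)) (sem (Ten S (Ten T U)))"
  by (rule meq_exact) (simp add: take_take drop_take drop_drop ac_simps)

lemma s_ten_id: "meq (dom (Ten (Id m) (Id n))) (cod (Ten (Id m) (Id n))) (sem (Ten (Id m) (Id n))) (sem (Id (m + n)))"
proof (rule meq_exact)
  fix x z :: "bool list"
  have e: "(x = z) = (take m x = take m z \<and> drop m x = drop m z)" by (rule take_drop_eq)
  show "sem (Ten (Id m) (Id n)) x z = sem (Id (m + n)) x z" by (simp only: e sem.simps dom.simps cod.simps) simp
qed

lemma s_interchange:
  assumes "cod A = dom B" "cod C = dom D"
  shows "meq (dom (Ten (Cmp A B) (Cmp C D))) (cod (Ten (Cmp A B) (Cmp C D)))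
    (sem (Ten (Cmp A B) (Cmp C D))) (sem (Cmp (Ten A C) (Ten B D)))"
proof (rule meq_exact)
  fix x z
  show "sem (Ten (Cmp A B) (Cmp C D)) x z = sem (Cmp (Ten A C) (Ten B D)) x z"
    using assms
    by (simp add: sem_cmp sum_split sum_product mult_ac)
qed

lemma g_snake1: "meq 1 1 (sem (Cmp (Ten (Id 1) Cup) (Ten Cap (Id 1)))) (sem (Id 1))"
  apply (rule meq_check[where c=1 and d=1])
   apply simp
  apply (unfold bl1)
  apply (simp only: list.set ball_simps)
  apply (simp add: cv_def sem_cmp_ev bl0 bl1 bl2 bl3 bl4)
  done

lemma g_snake2: "meq 1 1 (sem (Cmp (Ten Cup (Id 1)) (Ten (Id 1) Cap))) (sem (Id 1))"
  apply (rule meq_check[where c=1 and d=1])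
   apply simp
  apply (unfold bl1)
  apply (simp only: list.set ball_simps)
  apply (simp add: cv_def sem_cmp_ev bl0 bl1 bl2 bl3 bl4)
  done

lemma g_r1_cup_pos: "meq 0 2 (sem (Cmp Cup Pos)) (sem (Cup))"
  apply (rule meq_check[where c=26 and d=30])
   apply simp
  apply (unfold bl0 bl2)
  apply (simp only: list.set ball_simps)
  apply (simp add: cv_def sem_cmp_ev bl0 bl1 bl2 bl3 bl4)
  done

lemma g_r1_cup_neg: "meq 0 2 (sem (Cmp Cup Neg)) (sem (Cup))"
  apply (rule meq_check[where c=30 and d=26])
   apply simp
  apply (unfold bl0 bl2)
  apply (simp only: list.set ball_simps)
  apply (simp add: cv_def sem_cmp_ev bl0 bl1 bl2 bl3 bl4)
  done

lemma g_r1_cap_pos: "meq 2 0 (sem (Cmp Pos Cap)) (sem (Cap))"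
  apply (rule meq_check[where c=26 and d=30])
   apply simp
  apply (unfold bl0 bl2)
  apply (simp only: list.set ball_simps)
  apply (simp add: cv_def sem_cmp_ev bl0 bl1 bl2 bl3 bl4)
  done

lemma g_r1_cap_neg: "meq 2 0 (sem (Cmp Neg Cap)) (sem (Cap))"
  apply (rule meq_check[where c=30 and d=26])
   apply simp
  apply (unfold bl0 bl2)
  apply (simp only: list.set ball_simps)
  apply (simp add: cv_def sem_cmp_ev bl0 bl1 bl2 bl3 bl4)
  done

lemma g_r2a: "meq 2 2 (sem (Cmp Pos Neg)) (sem (Id 2))"
  apply (rule meq_check[where c=1 and d=1])
   apply simp
  apply (unfold bl2)
  apply (simp only: list.set ball_simps)
  apply (simp add: cv_def sem_cmp_ev bl0 bl1 bl2 bl3 bl4)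
  done

lemma g_r2b: "meq 2 2 (sem (Cmp Neg Pos)) (sem (Id 2))"
  apply (rule meq_check[where c=1 and d=1])
   apply simp
  apply (unfold bl2)
  apply (simp only: list.set ball_simps)
  apply (simp add: cv_def sem_cmp_ev bl0 bl1 bl2 bl3 bl4)
  done

lemma g_r3_pos: "meq 3 3 (sem (Cmp (Cmp (Ten Pos (Id 1)) (Ten (Id 1) Pos)) (Ten Pos (Id 1)))) (sem (Cmp (Cmp (Ten (Id 1) Pos) (Ten Pos (Id 1))) (Ten (Id 1) Pos)))"
  apply (rule meq_check[where c=1 and d=1])
   apply simp
  apply (unfold bl3)
  apply (simp only: list.set ball_simps)
  apply (simp add: cv_def sem_cmp_ev bl0 bl1 bl2 bl3 bl4)
  done

lemma g_r3_neg: "meq 3 3 (sem (Cmp (Cmp (Ten Neg (Id 1)) (Ten (Id 1) Neg)) (Ten Neg (Id 1)))) (sem (Cmp (Cmp (Ten (Id 1) Neg) (Ten Neg (Id 1))) (Ten (Id 1) Neg)))"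
  apply (rule meq_check[where c=1 and d=1])
   apply simp
  apply (unfold bl3)
  apply (simp only: list.set ball_simps)
  apply (simp add: cv_def sem_cmp_ev bl0 bl1 bl2 bl3 bl4)
  done

lemma g_slide_cup_pos: "meq 1 3 (sem (Cmp (Ten Cup (Id 1)) (Ten (Id 1) Pos))) (sem (Cmp (Ten (Id 1) Cup) (Ten Neg (Id 1))))"
  apply (rule meq_check[where c=1 and d=1])
   apply simp
  apply (unfold bl1 bl3)
  apply (simp only: list.set ball_simps)
  apply (simp add: cv_def sem_cmp_ev bl0 bl1 bl2 bl3 bl4)
  done

lemma g_slide_cup_neg: "meq 1 3 (sem (Cmp (Ten Cup (Id 1)) (Ten (Id 1) Neg))) (sem (Cmp (Ten (Id 1) Cup) (Ten Pos (Id 1))))"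
  apply (rule meq_check[where c=1 and d=1])
   apply simp
  apply (unfold bl1 bl3)
  apply (simp only: list.set ball_simps)
  apply (simp add: cv_def sem_cmp_ev bl0 bl1 bl2 bl3 bl4)
  done

lemma g_slide_cap_pos: "meq 3 1 (sem (Cmp (Ten (Id 1) Pos) (Ten Cap (Id 1)))) (sem (Cmp (Ten Neg (Id 1)) (Ten (Id 1) Cap)))"
  apply (rule meq_check[where c=1 and d=1])
   apply simp
  apply (unfold bl1 bl3)
  apply (simp only: list.set ball_simps)
  apply (simp add: cv_def sem_cmp_ev bl0 bl1 bl2 bl3 bl4)
  done

lemma g_slide_cap_neg: "meq 3 1 (sem (Cmp (Ten (Id 1) Neg) (Ten Cap (Id 1)))) (sem (Cmp (Ten Pos (Id 1)) (Ten (Id 1) Cap)))"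
  apply (rule meq_check[where c=1 and d=1])
   apply simp
  apply (unfold bl1 bl3)
  apply (simp only: list.set ball_simps)
  apply (simp add: cv_def sem_cmp_ev bl0 bl1 bl2 bl3 bl4)
  done

lemma g_rot_pos: "meq 2 2 (sem (Cmp (Cmp (Ten Cup (Id 2)) (Ten (Id 1) (Ten Pos (Id 1)))) (Ten (Id 2) Cap))) (sem (Neg))"
  apply (rule meq_check[where c=1 and d=1])
   apply simp
  apply (unfold bl2)
  apply (simp only: list.set ball_simps)
  apply (simp add: cv_def sem_cmp_ev bl0 bl1 bl2 bl3 bl4)
  done

lemma g_rot_neg: "meq 2 2 (sem (Cmp (Cmp (Ten Cup (Id 2)) (Ten (Id 1) (Ten Neg (Id 1)))) (Ten (Id 2) Cap))) (sem (Pos))"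
  apply (rule meq_check[where c=1 and d=1])
   apply simp
  apply (unfold bl2)
  apply (simp only: list.set ball_simps)
  apply (simp add: cv_def sem_cmp_ev bl0 bl1 bl2 bl3 bl4)
  done



definition "s3 = tsum Pos rt_2"
definition "s4 = tsum Pos s3"

lemma rt_5_s4: "rt_5 = tsum Pos s4"
  by (simp add: rt_5_def s4_def s3_def rt_2_def)

lemma rt_inf_dims[simp]: "dom rt_inf = 2" "cod rt_inf = 2"
  by (simp_all add: rt_inf_def )

lemma rt_inf_tab[simp]: "sem rt_inf [False,False] [False,False] = 1" "sem rt_inf [False,False] [False,True] = 0" "sem rt_inf [False,False] [True,False] = 0" "sem rt_inf [False,False] [True,True] = 0" "sem rt_inf [False,True] [False,False] = 0" "sem rt_inf [False,True] [False,True] = 1" "sem rt_inf [False,True] [True,False] = 0" "sem rt_inf [False,True] [True,True] = 0" "sem rt_inf [True,False] [False,False] = 0" "sem rt_inf [True,False] [False,True] = 0" "sem rt_inf [True,False] [True,False] = 1" "sem rt_inf [True,False] [True,True] = 0" "sem rt_inf [True,True] [False,False] = 0" "sem rt_inf [True,True] [False,True] = 0" "sem rt_inf [True,True] [True,False] = 0" "sem rt_inf [True,True] [True,True] = 1"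
  by (simp_all add: rt_inf_def cv_def sem_cmp_ev bl0 bl1 bl2 bl3 bl4)

lemma rt_0_dims[simp]: "dom rt_0 = 2" "cod rt_0 = 2"
  by (simp_all add: rt_0_def rt_inf_dims)

lemma rt_0_tab[simp]: "sem rt_0 [False,False] [False,False] = 0" "sem rt_0 [False,False] [False,True] = 0" "sem rt_0 [False,False] [True,False] = 0" "sem rt_0 [False,False] [True,True] = 0" "sem rt_0 [False,True] [False,False] = 0" "sem rt_0 [False,True] [False,True] = 169" "sem rt_0 [False,True] [True,False] = -286" "sem rt_0 [False,True] [True,True] = 0" "sem rt_0 [True,False] [False,False] = 0" "sem rt_0 [True,False] [False,True] = -286" "sem rt_0 [True,False] [True,False] = 484" "sem rt_0 [True,False] [True,True] = 0" "sem rt_0 [True,True] [False,False] = 0" "sem rt_0 [True,True] [False,True] = 0" "sem rt_0 [True,True] [True,False] = 0" "sem rt_0 [True,True] [True,True] = 0"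
  by (simp_all add: rt_0_def cv_def sem_cmp_ev bl0 bl1 bl2 bl3 bl4)

lemma rt_1_dims[simp]: "dom rt_1 = 2" "cod rt_1 = 2"
  by (simp_all add: rt_1_def rt_inf_dims rt_0_dims)

lemma rt_1_tab[simp]: "sem rt_1 [False,False] [False,False] = 6" "sem rt_1 [False,False] [False,True] = 0" "sem rt_1 [False,False] [True,False] = 0" "sem rt_1 [False,False] [True,True] = 0" "sem rt_1 [False,True] [False,False] = 0" "sem rt_1 [False,True] [False,True] = 1189" "sem rt_1 [False,True] [True,False] = -2002" "sem rt_1 [False,True] [True,True] = 0" "sem rt_1 [True,False] [False,False] = 0" "sem rt_1 [True,False] [False,True] = -2002" "sem rt_1 [True,False] [True,False] = 3394" "sem rt_1 [True,False] [True,True] = 0" "sem rt_1 [True,True] [False,False] = 0" "sem rt_1 [True,True] [False,True] = 0" "sem rt_1 [True,True] [True,False] = 0" "sem rt_1 [True,True] [True,True] = 6"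
  by (simp_all add: rt_1_def cv_def sem_cmp_ev bl0 bl1 bl2 bl3 bl4)

lemma rt_m1_dims[simp]: "dom rt_m1 = 2" "cod rt_m1 = 2"
  by (simp_all add: rt_m1_def rt_inf_dims rt_0_dims rt_1_dims)

lemma rt_m1_tab[simp]: "sem rt_m1 [False,False] [False,False] = 7" "sem rt_m1 [False,False] [False,True] = 0" "sem rt_m1 [False,False] [True,False] = 0" "sem rt_m1 [False,False] [True,True] = 0" "sem rt_m1 [False,True] [False,False] = 0" "sem rt_m1 [False,True] [False,True] = 1021" "sem rt_m1 [False,True] [True,False] = -1716" "sem rt_m1 [False,True] [True,True] = 0" "sem rt_m1 [True,False] [False,False] = 0" "sem rt_m1 [True,False] [False,True] = -1716" "sem rt_m1 [True,False] [True,False] = 2911" "sem rt_m1 [True,False] [True,True] = 0" "sem rt_m1 [True,True] [False,False] = 0" "sem rt_m1 [True,True] [False,True] = 0" "sem rt_m1 [True,True] [True,False] = 0" "sem rt_m1 [True,True] [True,True] = 7"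
  by (simp_all add: rt_m1_def cv_def sem_cmp_ev bl0 bl1 bl2 bl3 bl4)

lemma rt_2_dims[simp]: "dom rt_2 = 2" "cod rt_2 = 2"
  by (simp_all add: rt_2_def tsum_def rt_inf_dims rt_0_dims rt_1_dims rt_m1_dims)

lemma rt_2_tab[simp]: "sem rt_2 [False,False] [False,False] = 6894372" "sem rt_2 [False,False] [False,True] = 0" "sem rt_2 [False,False] [True,False] = 0" "sem rt_2 [False,False] [True,True] = 0" "sem rt_2 [False,True] [False,False] = 0" "sem rt_2 [False,True] [False,True] = 684247048" "sem rt_2 [False,True] [True,False] = -1146289144" "sem rt_2 [False,True] [True,True] = 0" "sem rt_2 [True,False] [False,False] = 0" "sem rt_2 [True,False] [False,True] = -1146289144" "sem rt_2 [True,False] [True,False] = 1946768308" "sem rt_2 [True,False] [True,True] = 0" "sem rt_2 [True,True] [False,False] = 0" "sem rt_2 [True,True] [False,True] = 0" "sem rt_2 [True,True] [True,False] = 0" "sem rt_2 [True,True] [True,True] = 6894372"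
  by (simp_all add: rt_2_def tsum_ev cv_def sem_cmp_ev bl0 bl1 bl2 bl3 bl4)

lemma rt_m2_dims[simp]: "dom rt_m2 = 2" "cod rt_m2 = 2"
  by (simp_all add: rt_m2_def tsum_def rt_inf_dims rt_0_dims rt_1_dims rt_m1_dims rt_2_dims)

lemma rt_m2_tab[simp]: "sem rt_m2 [False,False] [False,False] = 6902861" "sem rt_m2 [False,False] [False,True] = 0" "sem rt_m2 [False,False] [True,False] = 0" "sem rt_m2 [False,False] [True,True] = 0" "sem rt_m2 [False,True] [False,False] = 0" "sem rt_m2 [False,True] [False,True] = 504549725" "sem rt_m2 [False,True] [True,False] = -842171616" "sem rt_m2 [False,True] [True,True] = 0" "sem rt_m2 [True,False] [False,False] = 0" "sem rt_m2 [True,False] [False,True] = -842171616" "sem rt_m2 [True,False] [True,False] = 1432116365" "sem rt_m2 [True,False] [True,True] = 0" "sem rt_m2 [True,True] [False,False] = 0" "sem rt_m2 [True,True] [False,True] = 0" "sem rt_m2 [True,True] [True,False] = 0" "sem rt_m2 [True,True] [True,True] = 6902861"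
  by (simp_all add: rt_m2_def tsum_ev cv_def sem_cmp_ev bl0 bl1 bl2 bl3 bl4)

lemma rt_1_2_dims[simp]: "dom rt_1_2 = 2" "cod rt_1_2 = 2"
  by (simp_all add: rt_1_2_def tprod_def rt_inf_dims rt_0_dims rt_1_dims rt_m1_dims rt_2_dims rt_m2_dims)

lemma rt_1_2_tab[simp]: "sem rt_1_2 [False,False] [False,False] = 36" "sem rt_1_2 [False,False] [False,True] = 0" "sem rt_1_2 [False,False] [True,False] = 0" "sem rt_1_2 [False,False] [True,True] = 0" "sem rt_1_2 [False,True] [False,False] = 0" "sem rt_1_2 [False,True] [False,True] = 5421725" "sem rt_1_2 [False,True] [True,False] = -9175166" "sem rt_1_2 [False,True] [True,True] = 0" "sem rt_1_2 [True,False] [False,False] = 0" "sem rt_1_2 [True,False] [False,True] = -9175166" "sem rt_1_2 [True,False] [True,False] = 15527240" "sem rt_1_2 [True,False] [True,True] = 0" "sem rt_1_2 [True,True] [False,False] = 0" "sem rt_1_2 [True,True] [False,True] = 0" "sem rt_1_2 [True,True] [True,False] = 0" "sem rt_1_2 [True,True] [True,True] = 36"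
  by (simp_all add: rt_1_2_def tprod_def cv_def sem_cmp_ev bl0 bl1 bl2 bl3 bl4)

lemma rt_m1_2_dims[simp]: "dom rt_m1_2 = 2" "cod rt_m1_2 = 2"
  by (simp_all add: rt_m1_2_def tprod_def rt_inf_dims rt_0_dims rt_1_dims rt_m1_dims rt_2_dims rt_m2_dims rt_1_2_dims)

lemma rt_m1_2_tab[simp]: "sem rt_m1_2 [False,False] [False,False] = 49" "sem rt_m1_2 [False,False] [False,True] = 0" "sem rt_m1_2 [False,False] [True,False] = 0" "sem rt_m1_2 [False,False] [True,True] = 0" "sem rt_m1_2 [False,True] [False,False] = 0" "sem rt_m1_2 [False,True] [False,True] = 3987097" "sem rt_m1_2 [False,True] [True,False] = -6747312" "sem rt_m1_2 [False,True] [True,True] = 0" "sem rt_m1_2 [True,False] [False,False] = 0" "sem rt_m1_2 [True,False] [False,True] = -6747312" "sem rt_m1_2 [True,False] [True,False] = 11418577" "sem rt_m1_2 [True,False] [True,True] = 0" "sem rt_m1_2 [True,True] [False,False] = 0" "sem rt_m1_2 [True,True] [False,True] = 0" "sem rt_m1_2 [True,True] [True,False] = 0" "sem rt_m1_2 [True,True] [True,True] = 49"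
  by (simp_all add: rt_m1_2_def tprod_def cv_def sem_cmp_ev bl0 bl1 bl2 bl3 bl4)

lemma rt_3_2_dims[simp]: "dom rt_3_2 = 2" "cod rt_3_2 = 2"
  by (simp_all add: rt_3_2_def tsum_def rt_inf_dims rt_0_dims rt_1_dims rt_m1_dims rt_2_dims rt_m2_dims rt_1_2_dims rt_m1_2_dims)

lemma rt_3_2_tab[simp]: "sem rt_3_2 [False,False] [False,False] = 15765338496" "sem rt_3_2 [False,False] [False,True] = 0" "sem rt_3_2 [False,False] [True,False] = 0" "sem rt_3_2 [False,False] [True,True] = 0" "sem rt_3_2 [False,True] [False,False] = 0" "sem rt_3_2 [False,True] [False,True] = 3120072652604" "sem rt_3_2 [False,True] [True,False] = -5253443146952" "sem rt_3_2 [False,True] [True,True] = 0" "sem rt_3_2 [True,False] [False,False] = 0" "sem rt_3_2 [True,False] [False,True] = -5253443146952" "sem rt_3_2 [True,False] [True,False] = 8906207587184" "sem rt_3_2 [True,False] [True,True] = 0" "sem rt_3_2 [True,True] [False,False] = 0" "sem rt_3_2 [True,True] [False,True] = 0" "sem rt_3_2 [True,True] [True,False] = 0" "sem rt_3_2 [True,True] [True,True] = 15765338496"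
  by (simp_all add: rt_3_2_def tsum_ev cv_def sem_cmp_ev bl0 bl1 bl2 bl3 bl4)

lemma rt_m3_2_dims[simp]: "dom rt_m3_2 = 2" "cod rt_m3_2 = 2"
  by (simp_all add: rt_m3_2_def tsum_def rt_inf_dims rt_0_dims rt_1_dims rt_m1_dims rt_2_dims rt_m2_dims rt_1_2_dims rt_m1_2_dims rt_3_2_dims)

lemma rt_m3_2_tab[simp]: "sem rt_m3_2 [False,False] [False,False] = 13532390627" "sem rt_m3_2 [False,False] [False,True] = 0" "sem rt_m3_2 [False,False] [True,False] = 0" "sem rt_m3_2 [False,False] [True,True] = 0" "sem rt_m3_2 [False,True] [False,False] = 0" "sem rt_m3_2 [False,True] [False,True] = 1970279859875" "sem rt_m3_2 [False,True] [True,False] = -3311418794112" "sem rt_m3_2 [False,True] [True,True] = 0" "sem rt_m3_2 [True,False] [False,False] = 0" "sem rt_m3_2 [True,False] [False,True] = -3311418794112" "sem rt_m3_2 [True,False] [True,False] = 5617471888355" "sem rt_m3_2 [True,False] [True,True] = 0" "sem rt_m3_2 [True,True] [False,False] = 0" "sem rt_m3_2 [True,True] [False,True] = 0" "sem rt_m3_2 [True,True] [True,False] = 0" "sem rt_m3_2 [True,True] [True,True] = 13532390627"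
  by (simp_all add: rt_m3_2_def tsum_ev cv_def sem_cmp_ev bl0 bl1 bl2 bl3 bl4)

lemma rt_5_2_dims[simp]: "dom rt_5_2 = 2" "cod rt_5_2 = 2"
  by (simp_all add: rt_5_2_def tsum_def rt_inf_dims rt_0_dims rt_1_dims rt_m1_dims rt_2_dims rt_m2_dims rt_1_2_dims rt_m1_2_dims rt_3_2_dims rt_m3_2_dims)

lemma rt_5_2_tab[simp]: "sem rt_5_2 [False,False] [False,False] = 18103468429728672" "sem rt_5_2 [False,False] [False,True] = 0" "sem rt_5_2 [False,False] [True,False] = 0" "sem rt_5_2 [False,False] [True,True] = 0" "sem rt_5_2 [False,True] [False,False] = 0" "sem rt_5_2 [False,True] [False,True] = 1795542915883174448" "sem rt_5_2 [False,True] [True,False] = -3007974449536600544" "sem rt_5_2 [False,True] [True,True] = 0" "sem rt_5_2 [True,False] [False,False] = 0" "sem rt_5_2 [True,False] [False,True] = -3007974449536600544" "sem rt_5_2 [True,False] [True,False] = 5108521767645514208" "sem rt_5_2 [True,False] [True,True] = 0" "sem rt_5_2 [True,True] [False,False] = 0" "sem rt_5_2 [True,True] [False,True] = 0" "sem rt_5_2 [True,True] [True,False] = 0" "sem rt_5_2 [True,True] [True,True] = 18103468429728672"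
  by (simp_all add: rt_5_2_def tsum_ev cv_def sem_cmp_ev bl0 bl1 bl2 bl3 bl4)

lemma rt_2_5_dims[simp]: "dom rt_2_5 = 2" "cod rt_2_5 = 2"
  by (simp_all add: rt_2_5_def tprod_def rt_inf_dims rt_0_dims rt_1_dims rt_m1_dims rt_2_dims rt_m2_dims rt_1_2_dims rt_m1_2_dims rt_3_2_dims rt_m3_2_dims rt_5_2_dims)

lemma rt_2_5_tab[simp]: "sem rt_2_5 [False,False] [False,False] = 248197392" "sem rt_2_5 [False,False] [False,True] = 0" "sem rt_2_5 [False,False] [True,False] = 0" "sem rt_2_5 [False,False] [True,True] = 0" "sem rt_2_5 [False,True] [False,False] = 0" "sem rt_2_5 [False,True] [False,True] = 14227192506515704" "sem rt_2_5 [False,True] [True,False] = -24076786898692528" "sem rt_2_5 [False,True] [True,True] = 0" "sem rt_2_5 [True,False] [False,False] = 0" "sem rt_2_5 [True,False] [False,True] = -24076786898692528" "sem rt_2_5 [True,False] [True,False] = 40745331922907824" "sem rt_2_5 [True,False] [True,True] = 0" "sem rt_2_5 [True,True] [False,False] = 0" "sem rt_2_5 [True,True] [False,True] = 0" "sem rt_2_5 [True,True] [True,False] = 0" "sem rt_2_5 [True,True] [True,True] = 248197392"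
  by (simp_all add: rt_2_5_def tprod_def cv_def sem_cmp_ev bl0 bl1 bl2 bl3 bl4)

lemma s3_dims[simp]: "dom s3 = 2" "cod s3 = 2"
  by (simp_all add: s3_def tsum_def rt_inf_dims rt_0_dims rt_1_dims rt_m1_dims rt_2_dims rt_m2_dims rt_1_2_dims rt_m1_2_dims rt_3_2_dims rt_m3_2_dims rt_5_2_dims rt_2_5_dims)

lemma s3_tab[simp]: "sem s3 [False,False] [False,False] = 5941568685384" "sem s3 [False,False] [False,True] = 0" "sem s3 [False,False] [True,False] = 0" "sem s3 [False,False] [True,True] = 0" "sem s3 [False,True] [False,False] = 0" "sem s3 [False,True] [False,True] = 393774745088056" "sem s3 [False,True] [True,False] = -656333067758368" "sem s3 [False,True] [True,True] = 0" "sem s3 [True,False] [False,False] = 0" "sem s3 [True,False] [False,True] = -656333067758368" "sem s3 [True,False] [True,False] = 1116659067968776" "sem s3 [True,False] [True,True] = 0" "sem s3 [True,True] [False,False] = 0" "sem s3 [True,True] [False,True] = 0" "sem s3 [True,True] [True,False] = 0" "sem s3 [True,True] [True,True] = 5941568685384"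
  by (simp_all add: s3_def tsum_ev cv_def sem_cmp_ev bl0 bl1 bl2 bl3 bl4)

lemma s4_dims[simp]: "dom s4 = 2" "cod s4 = 2"
  by (simp_all add: s4_def tsum_def rt_inf_dims rt_0_dims rt_1_dims rt_m1_dims rt_2_dims rt_m2_dims rt_1_2_dims rt_m1_2_dims rt_3_2_dims rt_m3_2_dims rt_5_2_dims rt_2_5_dims s3_dims)

lemma s4_tab[simp]: "sem s4 [False,False] [False,False] = 4551522475710381648" "sem s4 [False,False] [False,True] = 0" "sem s4 [False,False] [True,False] = 0" "sem s4 [False,False] [True,True] = 0" "sem s4 [False,True] [False,False] = 0" "sem s4 [False,True] [False,True] = 226613939954941094032" "sem s4 [False,True] [True,False] = -375797937272544282496" "sem s4 [False,True] [True,True] = 0" "sem s4 [True,False] [False,False] = 0" "sem s4 [True,False] [False,True] = -375797937272544282496" "sem s4 [True,False] [True,False] = 640517262475400705872" "sem s4 [True,False] [True,True] = 0" "sem s4 [True,True] [False,False] = 0" "sem s4 [True,True] [False,True] = 0" "sem s4 [True,True] [True,False] = 0" "sem s4 [True,True] [True,True] = 4551522475710381648"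
  by (simp_all add: s4_def tsum_ev cv_def sem_cmp_ev bl0 bl1 bl2 bl3 bl4)

lemma rt_5_dims[simp]: "dom rt_5 = 2" "cod rt_5 = 2"
  by (simp_all add: rt_5_s4 tsum_def rt_inf_dims rt_0_dims rt_1_dims rt_m1_dims rt_2_dims rt_m2_dims rt_1_2_dims rt_m1_2_dims rt_3_2_dims rt_m3_2_dims rt_5_2_dims rt_2_5_dims s3_dims s4_dims)

lemma rt_5_tab[simp]: "sem rt_5 [False,False] [False,False] = 3268776452381963905018656" "sem rt_5 [False,False] [False,True] = 0" "sem rt_5 [False,False] [True,False] = 0" "sem rt_5 [False,False] [True,True] = 0" "sem rt_5 [False,True] [False,False] = 0" "sem rt_5 [False,True] [False,True] = 130415498953300051356150304" "sem rt_5 [False,True] [True,False] = -215171376540015224917299712" "sem rt_5 [False,True] [True,True] = 0" "sem rt_5 [True,False] [False,False] = 0" "sem rt_5 [True,False] [False,True] = -215171376540015224917299712" "sem rt_5 [True,False] [True,False] = 367404952135484652226602784" "sem rt_5 [True,False] [True,True] = 0" "sem rt_5 [True,True] [False,False] = 0" "sem rt_5 [True,True] [False,True] = 0" "sem rt_5 [True,True] [True,False] = 0" "sem rt_5 [True,True] [True,True] = 3268776452381963905018656"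
  by (simp_all add: rt_5_s4 tsum_ev cv_def sem_cmp_ev bl0 bl1 bl2 bl3 bl4)

lemma five: "meq 2 2 (sem rt_0) (sem rt_5)"
  apply (rule meq_check[where c=27 and d=38])
   apply simp
  apply (unfold bl2)
  apply (simp only: list.set ball_simps)
  apply simp
  done

lemma meq_dims: "meq m n M N \<Longrightarrow> m = m' \<Longrightarrow> n = n' \<Longrightarrow> meq m' n' M N" by simp

lemma main: "tg_rel R S T \<Longrightarrow> R = {(rt_0, rt_5)} \<Longrightarrow> meq (dom S) (cod S) (sem S) (sem T)"
proof (induction rule: tg_rel.induct)
  case (refl T) show ?case by (rule meq_refl)
next
  case (sym S T)
  then have "dom S = dom T" "cod S = cod T" using tg_rel_wt by blast+
  with sym show ?case using meq_sym by metis
next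
  case (trans S T U)
  then have "dom S = dom T" "cod S = cod T" using tg_rel_wt by blast+
  with trans show ?case using meq_trans by metis
next
  case (cong_cmp S S' T T')
  then have d: "cod S' = cod S" using tg_rel_wt by metis
  have "meq (dom S) (cod T) (\<lambda>x z. \<Sum>y\<in>{xs. length xs = cod S}. sem S x y * sem T y z)
      (\<lambda>x z. \<Sum>y\<in>{xs. length xs = cod S}. sem S' x y * sem T' y z)"
    by (rule meq_cmp) (use cong_cmp in auto)
  then show ?case using d by (simp add: sem_cmp[abs_def])
next
  case (cong_ten S S' T T')
  then have d: "dom S' = dom S" "cod S' = cod S" using tg_rel_wt by metis+
  have "meq (dom S + dom T) (cod S + cod T) (\<lambda>x z. sem S (take (dom S) x) (take (cod S) z) * sem T (drop (dom S) x) (drop (cod S) z))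
      (\<lambda>x z. sem S' (take (dom S) x) (take (cod S) z) * sem T' (drop (dom S) x) (drop (cod S) z))"
    by (rule meq_ten) (use cong_ten in auto)
  then show ?case using d by (simp add: sem.simps(7)[abs_def])
next
  case (move S T)
  then have "S = rt_0" "T = rt_5" by auto
  then show ?case using five by simp
next
  case (id_left T) then show ?case using s_id_left[of T] meq_refl by simp
next
  case (id_right T) then show ?case using s_id_right[of T] meq_refl by simp
next
  case (cmp_assoc S T U) then show ?case using s_assoc[of S U T] meq_refl by simp
next
  case (ten_unit_left T) show ?case by (rule s_unit_left)
next
  case (ten_unit_right T) show ?case by (rule s_unit_right)
next
  case (ten_assoc S T U) show ?case by (rule s_ten_assoc)
next
  case (ten_id m n) show ?case by (rule s_ten_id)
next
  case (interchange A B C D) then have "cod A = dom B" "cod C = dom D" by simp_all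
  then show ?case by (rule s_interchange)
next
  case snake1 show ?case by (rule meq_dims[OF g_snake1]) simp_all
next
  case snake2 show ?case by (rule meq_dims[OF g_snake2]) simp_all
next
  case r1_cup_pos show ?case by (rule meq_dims[OF g_r1_cup_pos]) simp_all
next
  case r1_cup_neg show ?case by (rule meq_dims[OF g_r1_cup_neg]) simp_all
next
  case r1_cap_pos show ?case by (rule meq_dims[OF g_r1_cap_pos]) simp_all
next
  case r1_cap_neg show ?case by (rule meq_dims[OF g_r1_cap_neg]) simp_all
next
  case r2a show ?case by (rule meq_dims[OF g_r2a]) simp_all
next
  case r2b show ?case by (rule meq_dims[OF g_r2b]) simp_all
next
  case r3_pos show ?case by (rule meq_dims[OF g_r3_pos]) simp_all
next
  case r3_neg show ?case by (rule meq_dims[OF g_r3_neg]) simp_all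
next
  case slide_cup_pos show ?case by (rule meq_dims[OF g_slide_cup_pos]) simp_all
next
  case slide_cup_neg show ?case by (rule meq_dims[OF g_slide_cup_neg]) simp_all
next
  case slide_cap_pos show ?case by (rule meq_dims[OF g_slide_cap_pos]) simp_all
next
  case slide_cap_neg show ?case by (rule meq_dims[OF g_slide_cap_neg]) simp_all
next
  case rot_pos show ?case by (rule meq_dims[OF g_rot_pos]) simp_all
next
  case rot_neg show ?case by (rule meq_dims[OF g_rot_neg]) simp_all
qed

lemma key:
  assumes "five_equiv S T" "dom S = 2" "cod S = 2"
    "length x1 = 2" "length z1 = 2" "length x2 = 2" "length z2 = 2"
  shows "(sem S x1 z1 * sem T x2 z2) mod 41 = (sem S x2 z2 * sem T x1 z1) mod 41"
proof -
  have "meq 2 2 (sem S) (sem T)" using main[of "{(rt_0, rt_5)}" S T] assms(1-3)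
    unfolding five_equiv_def by simp
  then obtain c d :: int where h: "\<forall>x z. length x = 2 \<longrightarrow> length z = 2 \<longrightarrow> sem S x z mod 41 = (c * sem T x z) mod 41"
    unfolding meq_def by blast
  have "(sem S x1 z1 * sem T x2 z2) mod 41 = ((c * sem T x1 z1) * sem T x2 z2) mod 41"
    by (rule mult_mod_cong) (use h assms in auto)
  moreover have "(sem S x2 z2 * sem T x1 z1) mod 41 = ((c * sem T x2 z2) * sem T x1 z1) mod 41"
    by (rule mult_mod_cong) (use h assms in auto)
  ultimately show ?thesis by (simp add: ac_simps)
qed

lemma ne_rt_inf_rt_0[simp]: "\<not> five_equiv rt_inf rt_0"
  proof
  assume h: "five_equiv rt_inf rt_0"
  show False using key[of rt_inf rt_0 "[False,False]" "[False,False]" "[False,True]" "[False,True]", OF h] by simp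
qed

lemma ne_rt_inf_rt_m1[simp]: "\<not> five_equiv rt_inf rt_m1"
  proof
  assume h: "five_equiv rt_inf rt_m1"
  show False using key[of rt_inf rt_m1 "[False,False]" "[False,False]" "[False,True]" "[False,True]", OF h] by simp
qed

lemma ne_rt_inf_rt_1[simp]: "\<not> five_equiv rt_inf rt_1"
  proof
  assume h: "five_equiv rt_inf rt_1"
  show False using key[of rt_inf rt_1 "[False,False]" "[False,False]" "[False,True]" "[False,True]", OF h] by simp
qed

lemma ne_rt_inf_rt_m2[simp]: "\<not> five_equiv rt_inf rt_m2"
  proof
  assume h: "five_equiv rt_inf rt_m2"
  show False using key[of rt_inf rt_m2 "[False,False]" "[False,False]" "[False,True]" "[False,True]", OF h] by simp
qed

lemma ne_rt_inf_rt_2[simp]: "\<not> five_equiv rt_inf rt_2"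
  proof
  assume h: "five_equiv rt_inf rt_2"
  show False using key[of rt_inf rt_2 "[False,False]" "[False,False]" "[False,True]" "[False,True]", OF h] by simp
qed

lemma ne_rt_inf_rt_2_5[simp]: "\<not> five_equiv rt_inf rt_2_5"
  proof
  assume h: "five_equiv rt_inf rt_2_5"
  show False using key[of rt_inf rt_2_5 "[False,False]" "[False,False]" "[False,True]" "[False,True]", OF h] by simp
qed

lemma ne_rt_inf_rt_5_2[simp]: "\<not> five_equiv rt_inf rt_5_2"
  proof
  assume h: "five_equiv rt_inf rt_5_2"
  show False using key[of rt_inf rt_5_2 "[False,False]" "[False,False]" "[False,True]" "[False,True]", OF h] by simp
qed

lemma ne_rt_inf_rt_3_2[simp]: "\<not> five_equiv rt_inf rt_3_2"
  proof
  assume h: "five_equiv rt_inf rt_3_2"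
  show False using key[of rt_inf rt_3_2 "[False,False]" "[False,False]" "[False,True]" "[False,True]", OF h] by simp
qed

lemma ne_rt_inf_rt_m3_2[simp]: "\<not> five_equiv rt_inf rt_m3_2"
  proof
  assume h: "five_equiv rt_inf rt_m3_2"
  show False using key[of rt_inf rt_m3_2 "[False,False]" "[False,False]" "[False,True]" "[False,True]", OF h] by simp
qed

lemma ne_rt_inf_rt_1_2[simp]: "\<not> five_equiv rt_inf rt_1_2"
  proof
  assume h: "five_equiv rt_inf rt_1_2"
  show False using key[of rt_inf rt_1_2 "[False,False]" "[False,False]" "[False,True]" "[False,True]", OF h] by simp
qed

lemma ne_rt_inf_rt_m1_2[simp]: "\<not> five_equiv rt_inf rt_m1_2"
  proof
  assume h: "five_equiv rt_inf rt_m1_2"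
  show False using key[of rt_inf rt_m1_2 "[False,False]" "[False,False]" "[False,True]" "[False,True]", OF h] by simp
qed

lemma ne_rt_0_rt_inf[simp]: "\<not> five_equiv rt_0 rt_inf"
  proof
  assume h: "five_equiv rt_0 rt_inf"
  show False using key[of rt_0 rt_inf "[False,False]" "[False,False]" "[False,True]" "[False,True]", OF h] by simp
qed

lemma ne_rt_0_rt_m1[simp]: "\<not> five_equiv rt_0 rt_m1"
  proof
  assume h: "five_equiv rt_0 rt_m1"
  show False using key[of rt_0 rt_m1 "[False,False]" "[False,False]" "[False,True]" "[False,True]", OF h] by simp
qed

lemma ne_rt_0_rt_1[simp]: "\<not> five_equiv rt_0 rt_1"
  proof
  assume h: "five_equiv rt_0 rt_1"
  show False using key[of rt_0 rt_1 "[False,False]" "[False,False]" "[False,True]" "[False,True]", OF h] by simp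
qed

lemma ne_rt_0_rt_m2[simp]: "\<not> five_equiv rt_0 rt_m2"
  proof
  assume h: "five_equiv rt_0 rt_m2"
  show False using key[of rt_0 rt_m2 "[False,False]" "[False,False]" "[False,True]" "[False,True]", OF h] by simp
qed

lemma ne_rt_0_rt_2[simp]: "\<not> five_equiv rt_0 rt_2"
  proof
  assume h: "five_equiv rt_0 rt_2"
  show False using key[of rt_0 rt_2 "[False,False]" "[False,False]" "[False,True]" "[False,True]", OF h] by simp
qed

lemma ne_rt_0_rt_2_5[simp]: "\<not> five_equiv rt_0 rt_2_5"
  proof
  assume h: "five_equiv rt_0 rt_2_5"
  show False using key[of rt_0 rt_2_5 "[False,False]" "[False,False]" "[False,True]" "[False,True]", OF h] by simp
qed

lemma ne_rt_0_rt_5_2[simp]: "\<not> five_equiv rt_0 rt_5_2"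
  proof
  assume h: "five_equiv rt_0 rt_5_2"
  show False using key[of rt_0 rt_5_2 "[False,False]" "[False,False]" "[False,True]" "[False,True]", OF h] by simp
qed

lemma ne_rt_0_rt_3_2[simp]: "\<not> five_equiv rt_0 rt_3_2"
  proof
  assume h: "five_equiv rt_0 rt_3_2"
  show False using key[of rt_0 rt_3_2 "[False,False]" "[False,False]" "[False,True]" "[False,True]", OF h] by simp
qed

lemma ne_rt_0_rt_m3_2[simp]: "\<not> five_equiv rt_0 rt_m3_2"
  proof
  assume h: "five_equiv rt_0 rt_m3_2"
  show False using key[of rt_0 rt_m3_2 "[False,False]" "[False,False]" "[False,True]" "[False,True]", OF h] by simp
qed

lemma ne_rt_0_rt_1_2[simp]: "\<not> five_equiv rt_0 rt_1_2"
  proof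
  assume h: "five_equiv rt_0 rt_1_2"
  show False using key[of rt_0 rt_1_2 "[False,False]" "[False,False]" "[False,True]" "[False,True]", OF h] by simp
qed

lemma ne_rt_0_rt_m1_2[simp]: "\<not> five_equiv rt_0 rt_m1_2"
  proof
  assume h: "five_equiv rt_0 rt_m1_2"
  show False using key[of rt_0 rt_m1_2 "[False,False]" "[False,False]" "[False,True]" "[False,True]", OF h] by simp
qed

lemma ne_rt_m1_rt_inf[simp]: "\<not> five_equiv rt_m1 rt_inf"
  proof
  assume h: "five_equiv rt_m1 rt_inf"
  show False using key[of rt_m1 rt_inf "[False,False]" "[False,False]" "[False,True]" "[False,True]", OF h] by simp
qed

lemma ne_rt_m1_rt_0[simp]: "\<not> five_equiv rt_m1 rt_0"
  proof
  assume h: "five_equiv rt_m1 rt_0"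
  show False using key[of rt_m1 rt_0 "[False,False]" "[False,False]" "[False,True]" "[False,True]", OF h] by simp
qed

lemma ne_rt_m1_rt_1[simp]: "\<not> five_equiv rt_m1 rt_1"
  proof
  assume h: "five_equiv rt_m1 rt_1"
  show False using key[of rt_m1 rt_1 "[False,False]" "[False,False]" "[False,True]" "[False,True]", OF h] by simp
qed

lemma ne_rt_m1_rt_m2[simp]: "\<not> five_equiv rt_m1 rt_m2"
  proof
  assume h: "five_equiv rt_m1 rt_m2"
  show False using key[of rt_m1 rt_m2 "[False,False]" "[False,False]" "[False,True]" "[False,True]", OF h] by simp
qed

lemma ne_rt_m1_rt_2[simp]: "\<not> five_equiv rt_m1 rt_2"
  proof
  assume h: "five_equiv rt_m1 rt_2"
  show False using key[of rt_m1 rt_2 "[False,False]" "[False,False]" "[False,True]" "[False,True]", OF h] by simp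
qed

lemma ne_rt_m1_rt_2_5[simp]: "\<not> five_equiv rt_m1 rt_2_5"
  proof
  assume h: "five_equiv rt_m1 rt_2_5"
  show False using key[of rt_m1 rt_2_5 "[False,False]" "[False,False]" "[False,True]" "[False,True]", OF h] by simp
qed

lemma ne_rt_m1_rt_5_2[simp]: "\<not> five_equiv rt_m1 rt_5_2"
  proof
  assume h: "five_equiv rt_m1 rt_5_2"
  show False using key[of rt_m1 rt_5_2 "[False,False]" "[False,False]" "[False,True]" "[False,True]", OF h] by simp
qed

lemma ne_rt_m1_rt_3_2[simp]: "\<not> five_equiv rt_m1 rt_3_2"
  proof
  assume h: "five_equiv rt_m1 rt_3_2"
  show False using key[of rt_m1 rt_3_2 "[False,False]" "[False,False]" "[False,True]" "[False,True]", OF h] by simp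
qed

lemma ne_rt_m1_rt_m3_2[simp]: "\<not> five_equiv rt_m1 rt_m3_2"
  proof
  assume h: "five_equiv rt_m1 rt_m3_2"
  show False using key[of rt_m1 rt_m3_2 "[False,False]" "[False,False]" "[False,True]" "[False,True]", OF h] by simp
qed

lemma ne_rt_m1_rt_1_2[simp]: "\<not> five_equiv rt_m1 rt_1_2"
  proof
  assume h: "five_equiv rt_m1 rt_1_2"
  show False using key[of rt_m1 rt_1_2 "[False,False]" "[False,False]" "[False,True]" "[False,True]", OF h] by simp
qed

lemma ne_rt_m1_rt_m1_2[simp]: "\<not> five_equiv rt_m1 rt_m1_2"
  proof
  assume h: "five_equiv rt_m1 rt_m1_2"
  show False using key[of rt_m1 rt_m1_2 "[False,False]" "[False,False]" "[False,True]" "[False,True]", OF h] by simp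
qed

lemma ne_rt_1_rt_inf[simp]: "\<not> five_equiv rt_1 rt_inf"
  proof
  assume h: "five_equiv rt_1 rt_inf"
  show False using key[of rt_1 rt_inf "[False,False]" "[False,False]" "[False,True]" "[False,True]", OF h] by simp
qed

lemma ne_rt_1_rt_0[simp]: "\<not> five_equiv rt_1 rt_0"
  proof
  assume h: "five_equiv rt_1 rt_0"
  show False using key[of rt_1 rt_0 "[False,False]" "[False,False]" "[False,True]" "[False,True]", OF h] by simp
qed

lemma ne_rt_1_rt_m1[simp]: "\<not> five_equiv rt_1 rt_m1"
  proof
  assume h: "five_equiv rt_1 rt_m1"
  show False using key[of rt_1 rt_m1 "[False,False]" "[False,False]" "[False,True]" "[False,True]", OF h] by simp
qed

lemma ne_rt_1_rt_m2[simp]: "\<not> five_equiv rt_1 rt_m2"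
  proof
  assume h: "five_equiv rt_1 rt_m2"
  show False using key[of rt_1 rt_m2 "[False,False]" "[False,False]" "[False,True]" "[False,True]", OF h] by simp
qed

lemma ne_rt_1_rt_2[simp]: "\<not> five_equiv rt_1 rt_2"
  proof
  assume h: "five_equiv rt_1 rt_2"
  show False using key[of rt_1 rt_2 "[False,False]" "[False,False]" "[False,True]" "[False,True]", OF h] by simp
qed

lemma ne_rt_1_rt_2_5[simp]: "\<not> five_equiv rt_1 rt_2_5"
  proof
  assume h: "five_equiv rt_1 rt_2_5"
  show False using key[of rt_1 rt_2_5 "[False,False]" "[False,False]" "[False,True]" "[False,True]", OF h] by simp
qed

lemma ne_rt_1_rt_5_2[simp]: "\<not> five_equiv rt_1 rt_5_2"
  proof
  assume h: "five_equiv rt_1 rt_5_2"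
  show False using key[of rt_1 rt_5_2 "[False,False]" "[False,False]" "[False,True]" "[False,True]", OF h] by simp
qed

lemma ne_rt_1_rt_3_2[simp]: "\<not> five_equiv rt_1 rt_3_2"
  proof
  assume h: "five_equiv rt_1 rt_3_2"
  show False using key[of rt_1 rt_3_2 "[False,False]" "[False,False]" "[False,True]" "[False,True]", OF h] by simp
qed

lemma ne_rt_1_rt_m3_2[simp]: "\<not> five_equiv rt_1 rt_m3_2"
  proof
  assume h: "five_equiv rt_1 rt_m3_2"
  show False using key[of rt_1 rt_m3_2 "[False,False]" "[False,False]" "[False,True]" "[False,True]", OF h] by simp
qed

lemma ne_rt_1_rt_1_2[simp]: "\<not> five_equiv rt_1 rt_1_2"
  proof
  assume h: "five_equiv rt_1 rt_1_2"
  show False using key[of rt_1 rt_1_2 "[False,False]" "[False,False]" "[False,True]" "[False,True]", OF h] by simp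
qed

lemma ne_rt_1_rt_m1_2[simp]: "\<not> five_equiv rt_1 rt_m1_2"
  proof
  assume h: "five_equiv rt_1 rt_m1_2"
  show False using key[of rt_1 rt_m1_2 "[False,False]" "[False,False]" "[False,True]" "[False,True]", OF h] by simp
qed

lemma ne_rt_m2_rt_inf[simp]: "\<not> five_equiv rt_m2 rt_inf"
  proof
  assume h: "five_equiv rt_m2 rt_inf"
  show False using key[of rt_m2 rt_inf "[False,False]" "[False,False]" "[False,True]" "[False,True]", OF h] by simp
qed

lemma ne_rt_m2_rt_0[simp]: "\<not> five_equiv rt_m2 rt_0"
  proof
  assume h: "five_equiv rt_m2 rt_0"
  show False using key[of rt_m2 rt_0 "[False,False]" "[False,False]" "[False,True]" "[False,True]", OF h] by simp
qed

lemma ne_rt_m2_rt_m1[simp]: "\<not> five_equiv rt_m2 rt_m1"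
  proof
  assume h: "five_equiv rt_m2 rt_m1"
  show False using key[of rt_m2 rt_m1 "[False,False]" "[False,False]" "[False,True]" "[False,True]", OF h] by simp
qed

lemma ne_rt_m2_rt_1[simp]: "\<not> five_equiv rt_m2 rt_1"
  proof
  assume h: "five_equiv rt_m2 rt_1"
  show False using key[of rt_m2 rt_1 "[False,False]" "[False,False]" "[False,True]" "[False,True]", OF h] by simp
qed

lemma ne_rt_m2_rt_2[simp]: "\<not> five_equiv rt_m2 rt_2"
  proof
  assume h: "five_equiv rt_m2 rt_2"
  show False using key[of rt_m2 rt_2 "[False,False]" "[False,False]" "[False,True]" "[False,True]", OF h] by simp
qed

lemma ne_rt_m2_rt_2_5[simp]: "\<not> five_equiv rt_m2 rt_2_5"
  proof
  assume h: "five_equiv rt_m2 rt_2_5"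
  show False using key[of rt_m2 rt_2_5 "[False,False]" "[False,False]" "[False,True]" "[False,True]", OF h] by simp
qed

lemma ne_rt_m2_rt_5_2[simp]: "\<not> five_equiv rt_m2 rt_5_2"
  proof
  assume h: "five_equiv rt_m2 rt_5_2"
  show False using key[of rt_m2 rt_5_2 "[False,False]" "[False,False]" "[False,True]" "[False,True]", OF h] by simp
qed

lemma ne_rt_m2_rt_3_2[simp]: "\<not> five_equiv rt_m2 rt_3_2"
  proof
  assume h: "five_equiv rt_m2 rt_3_2"
  show False using key[of rt_m2 rt_3_2 "[False,False]" "[False,False]" "[False,True]" "[False,True]", OF h] by simp
qed

lemma ne_rt_m2_rt_m3_2[simp]: "\<not> five_equiv rt_m2 rt_m3_2"
  proof
  assume h: "five_equiv rt_m2 rt_m3_2"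
  show False using key[of rt_m2 rt_m3_2 "[False,False]" "[False,False]" "[False,True]" "[False,True]", OF h] by simp
qed

lemma ne_rt_m2_rt_1_2[simp]: "\<not> five_equiv rt_m2 rt_1_2"
  proof
  assume h: "five_equiv rt_m2 rt_1_2"
  show False using key[of rt_m2 rt_1_2 "[False,False]" "[False,False]" "[False,True]" "[False,True]", OF h] by simp
qed

lemma ne_rt_m2_rt_m1_2[simp]: "\<not> five_equiv rt_m2 rt_m1_2"
  proof
  assume h: "five_equiv rt_m2 rt_m1_2"
  show False using key[of rt_m2 rt_m1_2 "[False,False]" "[False,False]" "[False,True]" "[False,True]", OF h] by simp
qed

lemma ne_rt_2_rt_inf[simp]: "\<not> five_equiv rt_2 rt_inf"
  proof
  assume h: "five_equiv rt_2 rt_inf"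
  show False using key[of rt_2 rt_inf "[False,False]" "[False,False]" "[False,True]" "[False,True]", OF h] by simp
qed

lemma ne_rt_2_rt_0[simp]: "\<not> five_equiv rt_2 rt_0"
  proof
  assume h: "five_equiv rt_2 rt_0"
  show False using key[of rt_2 rt_0 "[False,False]" "[False,False]" "[False,True]" "[False,True]", OF h] by simp
qed

lemma ne_rt_2_rt_m1[simp]: "\<not> five_equiv rt_2 rt_m1"
  proof
  assume h: "five_equiv rt_2 rt_m1"
  show False using key[of rt_2 rt_m1 "[False,False]" "[False,False]" "[False,True]" "[False,True]", OF h] by simp
qed

lemma ne_rt_2_rt_1[simp]: "\<not> five_equiv rt_2 rt_1"
  proof
  assume h: "five_equiv rt_2 rt_1"
  show False using key[of rt_2 rt_1 "[False,False]" "[False,False]" "[False,True]" "[False,True]", OF h] by simp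
qed

lemma ne_rt_2_rt_m2[simp]: "\<not> five_equiv rt_2 rt_m2"
  proof
  assume h: "five_equiv rt_2 rt_m2"
  show False using key[of rt_2 rt_m2 "[False,False]" "[False,False]" "[False,True]" "[False,True]", OF h] by simp
qed

lemma ne_rt_2_rt_2_5[simp]: "\<not> five_equiv rt_2 rt_2_5"
  proof
  assume h: "five_equiv rt_2 rt_2_5"
  show False using key[of rt_2 rt_2_5 "[False,False]" "[False,False]" "[False,True]" "[False,True]", OF h] by simp
qed

lemma ne_rt_2_rt_5_2[simp]: "\<not> five_equiv rt_2 rt_5_2"
  proof
  assume h: "five_equiv rt_2 rt_5_2"
  show False using key[of rt_2 rt_5_2 "[False,False]" "[False,False]" "[False,True]" "[False,True]", OF h] by simp
qed

lemma ne_rt_2_rt_3_2[simp]: "\<not> five_equiv rt_2 rt_3_2"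
  proof
  assume h: "five_equiv rt_2 rt_3_2"
  show False using key[of rt_2 rt_3_2 "[False,False]" "[False,False]" "[False,True]" "[False,True]", OF h] by simp
qed

lemma ne_rt_2_rt_m3_2[simp]: "\<not> five_equiv rt_2 rt_m3_2"
  proof
  assume h: "five_equiv rt_2 rt_m3_2"
  show False using key[of rt_2 rt_m3_2 "[False,False]" "[False,False]" "[False,True]" "[False,True]", OF h] by simp
qed

lemma ne_rt_2_rt_1_2[simp]: "\<not> five_equiv rt_2 rt_1_2"
  proof
  assume h: "five_equiv rt_2 rt_1_2"
  show False using key[of rt_2 rt_1_2 "[False,False]" "[False,False]" "[False,True]" "[False,True]", OF h] by simp
qed

lemma ne_rt_2_rt_m1_2[simp]: "\<not> five_equiv rt_2 rt_m1_2"
  proof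
  assume h: "five_equiv rt_2 rt_m1_2"
  show False using key[of rt_2 rt_m1_2 "[False,False]" "[False,False]" "[False,True]" "[False,True]", OF h] by simp
qed

lemma ne_rt_2_5_rt_inf[simp]: "\<not> five_equiv rt_2_5 rt_inf"
  proof
  assume h: "five_equiv rt_2_5 rt_inf"
  show False using key[of rt_2_5 rt_inf "[False,False]" "[False,False]" "[False,True]" "[False,True]", OF h] by simp
qed

lemma ne_rt_2_5_rt_0[simp]: "\<not> five_equiv rt_2_5 rt_0"
  proof
  assume h: "five_equiv rt_2_5 rt_0"
  show False using key[of rt_2_5 rt_0 "[False,False]" "[False,False]" "[False,True]" "[False,True]", OF h] by simp
qed

lemma ne_rt_2_5_rt_m1[simp]: "\<not> five_equiv rt_2_5 rt_m1"
  proof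
  assume h: "five_equiv rt_2_5 rt_m1"
  show False using key[of rt_2_5 rt_m1 "[False,False]" "[False,False]" "[False,True]" "[False,True]", OF h] by simp
qed

lemma ne_rt_2_5_rt_1[simp]: "\<not> five_equiv rt_2_5 rt_1"
  proof
  assume h: "five_equiv rt_2_5 rt_1"
  show False using key[of rt_2_5 rt_1 "[False,False]" "[False,False]" "[False,True]" "[False,True]", OF h] by simp
qed

lemma ne_rt_2_5_rt_m2[simp]: "\<not> five_equiv rt_2_5 rt_m2"
  proof
  assume h: "five_equiv rt_2_5 rt_m2"
  show False using key[of rt_2_5 rt_m2 "[False,False]" "[False,False]" "[False,True]" "[False,True]", OF h] by simp
qed

lemma ne_rt_2_5_rt_2[simp]: "\<not> five_equiv rt_2_5 rt_2"
  proof
  assume h: "five_equiv rt_2_5 rt_2"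
  show False using key[of rt_2_5 rt_2 "[False,False]" "[False,False]" "[False,True]" "[False,True]", OF h] by simp
qed

lemma ne_rt_2_5_rt_5_2[simp]: "\<not> five_equiv rt_2_5 rt_5_2"
  proof
  assume h: "five_equiv rt_2_5 rt_5_2"
  show False using key[of rt_2_5 rt_5_2 "[False,False]" "[False,False]" "[False,True]" "[False,True]", OF h] by simp
qed

lemma ne_rt_2_5_rt_3_2[simp]: "\<not> five_equiv rt_2_5 rt_3_2"
  proof
  assume h: "five_equiv rt_2_5 rt_3_2"
  show False using key[of rt_2_5 rt_3_2 "[False,False]" "[False,False]" "[False,True]" "[False,True]", OF h] by simp
qed

lemma ne_rt_2_5_rt_m3_2[simp]: "\<not> five_equiv rt_2_5 rt_m3_2"
  proof
  assume h: "five_equiv rt_2_5 rt_m3_2"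
  show False using key[of rt_2_5 rt_m3_2 "[False,False]" "[False,False]" "[False,True]" "[False,True]", OF h] by simp
qed

lemma ne_rt_2_5_rt_1_2[simp]: "\<not> five_equiv rt_2_5 rt_1_2"
  proof
  assume h: "five_equiv rt_2_5 rt_1_2"
  show False using key[of rt_2_5 rt_1_2 "[False,False]" "[False,False]" "[False,True]" "[False,True]", OF h] by simp
qed

lemma ne_rt_2_5_rt_m1_2[simp]: "\<not> five_equiv rt_2_5 rt_m1_2"
  proof
  assume h: "five_equiv rt_2_5 rt_m1_2"
  show False using key[of rt_2_5 rt_m1_2 "[False,False]" "[False,False]" "[False,True]" "[False,True]", OF h] by simp
qed

lemma ne_rt_5_2_rt_inf[simp]: "\<not> five_equiv rt_5_2 rt_inf"
  proof
  assume h: "five_equiv rt_5_2 rt_inf"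
  show False using key[of rt_5_2 rt_inf "[False,False]" "[False,False]" "[False,True]" "[False,True]", OF h] by simp
qed

lemma ne_rt_5_2_rt_0[simp]: "\<not> five_equiv rt_5_2 rt_0"
  proof
  assume h: "five_equiv rt_5_2 rt_0"
  show False using key[of rt_5_2 rt_0 "[False,False]" "[False,False]" "[False,True]" "[False,True]", OF h] by simp
qed

lemma ne_rt_5_2_rt_m1[simp]: "\<not> five_equiv rt_5_2 rt_m1"
  proof
  assume h: "five_equiv rt_5_2 rt_m1"
  show False using key[of rt_5_2 rt_m1 "[False,False]" "[False,False]" "[False,True]" "[False,True]", OF h] by simp
qed

lemma ne_rt_5_2_rt_1[simp]: "\<not> five_equiv rt_5_2 rt_1"
  proof
  assume h: "five_equiv rt_5_2 rt_1"
  show False using key[of rt_5_2 rt_1 "[False,False]" "[False,False]" "[False,True]" "[False,True]", OF h] by simp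
qed

lemma ne_rt_5_2_rt_m2[simp]: "\<not> five_equiv rt_5_2 rt_m2"
  proof
  assume h: "five_equiv rt_5_2 rt_m2"
  show False using key[of rt_5_2 rt_m2 "[False,False]" "[False,False]" "[False,True]" "[False,True]", OF h] by simp
qed

lemma ne_rt_5_2_rt_2[simp]: "\<not> five_equiv rt_5_2 rt_2"
  proof
  assume h: "five_equiv rt_5_2 rt_2"
  show False using key[of rt_5_2 rt_2 "[False,False]" "[False,False]" "[False,True]" "[False,True]", OF h] by simp
qed

lemma ne_rt_5_2_rt_2_5[simp]: "\<not> five_equiv rt_5_2 rt_2_5"
  proof
  assume h: "five_equiv rt_5_2 rt_2_5"
  show False using key[of rt_5_2 rt_2_5 "[False,False]" "[False,False]" "[False,True]" "[False,True]", OF h] by simp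
qed

lemma ne_rt_5_2_rt_3_2[simp]: "\<not> five_equiv rt_5_2 rt_3_2"
  proof
  assume h: "five_equiv rt_5_2 rt_3_2"
  show False using key[of rt_5_2 rt_3_2 "[False,False]" "[False,False]" "[False,True]" "[False,True]", OF h] by simp
qed

lemma ne_rt_5_2_rt_m3_2[simp]: "\<not> five_equiv rt_5_2 rt_m3_2"
  proof
  assume h: "five_equiv rt_5_2 rt_m3_2"
  show False using key[of rt_5_2 rt_m3_2 "[False,False]" "[False,False]" "[False,True]" "[False,True]", OF h] by simp
qed

lemma ne_rt_5_2_rt_1_2[simp]: "\<not> five_equiv rt_5_2 rt_1_2"
  proof
  assume h: "five_equiv rt_5_2 rt_1_2"
  show False using key[of rt_5_2 rt_1_2 "[False,False]" "[False,False]" "[False,True]" "[False,True]", OF h] by simp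
qed

lemma ne_rt_5_2_rt_m1_2[simp]: "\<not> five_equiv rt_5_2 rt_m1_2"
  proof
  assume h: "five_equiv rt_5_2 rt_m1_2"
  show False using key[of rt_5_2 rt_m1_2 "[False,False]" "[False,False]" "[False,True]" "[False,True]", OF h] by simp
qed

lemma ne_rt_3_2_rt_inf[simp]: "\<not> five_equiv rt_3_2 rt_inf"
  proof
  assume h: "five_equiv rt_3_2 rt_inf"
  show False using key[of rt_3_2 rt_inf "[False,False]" "[False,False]" "[False,True]" "[False,True]", OF h] by simp
qed

lemma ne_rt_3_2_rt_0[simp]: "\<not> five_equiv rt_3_2 rt_0"
  proof
  assume h: "five_equiv rt_3_2 rt_0"
  show False using key[of rt_3_2 rt_0 "[False,False]" "[False,False]" "[False,True]" "[False,True]", OF h] by simp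
qed

lemma ne_rt_3_2_rt_m1[simp]: "\<not> five_equiv rt_3_2 rt_m1"
  proof
  assume h: "five_equiv rt_3_2 rt_m1"
  show False using key[of rt_3_2 rt_m1 "[False,False]" "[False,False]" "[False,True]" "[False,True]", OF h] by simp
qed

lemma ne_rt_3_2_rt_1[simp]: "\<not> five_equiv rt_3_2 rt_1"
  proof
  assume h: "five_equiv rt_3_2 rt_1"
  show False using key[of rt_3_2 rt_1 "[False,False]" "[False,False]" "[False,True]" "[False,True]", OF h] by simp
qed

lemma ne_rt_3_2_rt_m2[simp]: "\<not> five_equiv rt_3_2 rt_m2"
  proof
  assume h: "five_equiv rt_3_2 rt_m2"
  show False using key[of rt_3_2 rt_m2 "[False,False]" "[False,False]" "[False,True]" "[False,True]", OF h] by simp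
qed

lemma ne_rt_3_2_rt_2[simp]: "\<not> five_equiv rt_3_2 rt_2"
  proof
  assume h: "five_equiv rt_3_2 rt_2"
  show False using key[of rt_3_2 rt_2 "[False,False]" "[False,False]" "[False,True]" "[False,True]", OF h] by simp
qed

lemma ne_rt_3_2_rt_2_5[simp]: "\<not> five_equiv rt_3_2 rt_2_5"
  proof
  assume h: "five_equiv rt_3_2 rt_2_5"
  show False using key[of rt_3_2 rt_2_5 "[False,False]" "[False,False]" "[False,True]" "[False,True]", OF h] by simp
qed

lemma ne_rt_3_2_rt_5_2[simp]: "\<not> five_equiv rt_3_2 rt_5_2"
  proof
  assume h: "five_equiv rt_3_2 rt_5_2"
  show False using key[of rt_3_2 rt_5_2 "[False,False]" "[False,False]" "[False,True]" "[False,True]", OF h] by simp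
qed

lemma ne_rt_3_2_rt_m3_2[simp]: "\<not> five_equiv rt_3_2 rt_m3_2"
  proof
  assume h: "five_equiv rt_3_2 rt_m3_2"
  show False using key[of rt_3_2 rt_m3_2 "[False,False]" "[False,False]" "[False,True]" "[False,True]", OF h] by simp
qed

lemma ne_rt_3_2_rt_1_2[simp]: "\<not> five_equiv rt_3_2 rt_1_2"
  proof
  assume h: "five_equiv rt_3_2 rt_1_2"
  show False using key[of rt_3_2 rt_1_2 "[False,False]" "[False,False]" "[False,True]" "[False,True]", OF h] by simp
qed

lemma ne_rt_3_2_rt_m1_2[simp]: "\<not> five_equiv rt_3_2 rt_m1_2"
  proof
  assume h: "five_equiv rt_3_2 rt_m1_2"
  show False using key[of rt_3_2 rt_m1_2 "[False,False]" "[False,False]" "[False,True]" "[False,True]", OF h] by simp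
qed

lemma ne_rt_m3_2_rt_inf[simp]: "\<not> five_equiv rt_m3_2 rt_inf"
  proof
  assume h: "five_equiv rt_m3_2 rt_inf"
  show False using key[of rt_m3_2 rt_inf "[False,False]" "[False,False]" "[False,True]" "[False,True]", OF h] by simp
qed

lemma ne_rt_m3_2_rt_0[simp]: "\<not> five_equiv rt_m3_2 rt_0"
  proof
  assume h: "five_equiv rt_m3_2 rt_0"
  show False using key[of rt_m3_2 rt_0 "[False,False]" "[False,False]" "[False,True]" "[False,True]", OF h] by simp
qed

lemma ne_rt_m3_2_rt_m1[simp]: "\<not> five_equiv rt_m3_2 rt_m1"
  proof
  assume h: "five_equiv rt_m3_2 rt_m1"
  show False using key[of rt_m3_2 rt_m1 "[False,False]" "[False,False]" "[False,True]" "[False,True]", OF h] by simp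
qed

lemma ne_rt_m3_2_rt_1[simp]: "\<not> five_equiv rt_m3_2 rt_1"
  proof
  assume h: "five_equiv rt_m3_2 rt_1"
  show False using key[of rt_m3_2 rt_1 "[False,False]" "[False,False]" "[False,True]" "[False,True]", OF h] by simp
qed

lemma ne_rt_m3_2_rt_m2[simp]: "\<not> five_equiv rt_m3_2 rt_m2"
  proof
  assume h: "five_equiv rt_m3_2 rt_m2"
  show False using key[of rt_m3_2 rt_m2 "[False,False]" "[False,False]" "[False,True]" "[False,True]", OF h] by simp
qed

lemma ne_rt_m3_2_rt_2[simp]: "\<not> five_equiv rt_m3_2 rt_2"
  proof
  assume h: "five_equiv rt_m3_2 rt_2"
  show False using key[of rt_m3_2 rt_2 "[False,False]" "[False,False]" "[False,True]" "[False,True]", OF h] by simp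
qed

lemma ne_rt_m3_2_rt_2_5[simp]: "\<not> five_equiv rt_m3_2 rt_2_5"
  proof
  assume h: "five_equiv rt_m3_2 rt_2_5"
  show False using key[of rt_m3_2 rt_2_5 "[False,False]" "[False,False]" "[False,True]" "[False,True]", OF h] by simp
qed

lemma ne_rt_m3_2_rt_5_2[simp]: "\<not> five_equiv rt_m3_2 rt_5_2"
  proof
  assume h: "five_equiv rt_m3_2 rt_5_2"
  show False using key[of rt_m3_2 rt_5_2 "[False,False]" "[False,False]" "[False,True]" "[False,True]", OF h] by simp
qed

lemma ne_rt_m3_2_rt_3_2[simp]: "\<not> five_equiv rt_m3_2 rt_3_2"
  proof
  assume h: "five_equiv rt_m3_2 rt_3_2"
  show False using key[of rt_m3_2 rt_3_2 "[False,False]" "[False,False]" "[False,True]" "[False,True]", OF h] by simp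
qed

lemma ne_rt_m3_2_rt_1_2[simp]: "\<not> five_equiv rt_m3_2 rt_1_2"
  proof
  assume h: "five_equiv rt_m3_2 rt_1_2"
  show False using key[of rt_m3_2 rt_1_2 "[False,False]" "[False,False]" "[False,True]" "[False,True]", OF h] by simp
qed

lemma ne_rt_m3_2_rt_m1_2[simp]: "\<not> five_equiv rt_m3_2 rt_m1_2"
  proof
  assume h: "five_equiv rt_m3_2 rt_m1_2"
  show False using key[of rt_m3_2 rt_m1_2 "[False,False]" "[False,False]" "[False,True]" "[False,True]", OF h] by simp
qed

lemma ne_rt_1_2_rt_inf[simp]: "\<not> five_equiv rt_1_2 rt_inf"
  proof
  assume h: "five_equiv rt_1_2 rt_inf"
  show False using key[of rt_1_2 rt_inf "[False,False]" "[False,False]" "[False,True]" "[False,True]", OF h] by simp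
qed

lemma ne_rt_1_2_rt_0[simp]: "\<not> five_equiv rt_1_2 rt_0"
  proof
  assume h: "five_equiv rt_1_2 rt_0"
  show False using key[of rt_1_2 rt_0 "[False,False]" "[False,False]" "[False,True]" "[False,True]", OF h] by simp
qed

lemma ne_rt_1_2_rt_m1[simp]: "\<not> five_equiv rt_1_2 rt_m1"
  proof
  assume h: "five_equiv rt_1_2 rt_m1"
  show False using key[of rt_1_2 rt_m1 "[False,False]" "[False,False]" "[False,True]" "[False,True]", OF h] by simp
qed

lemma ne_rt_1_2_rt_1[simp]: "\<not> five_equiv rt_1_2 rt_1"
  proof
  assume h: "five_equiv rt_1_2 rt_1"
  show False using key[of rt_1_2 rt_1 "[False,False]" "[False,False]" "[False,True]" "[False,True]", OF h] by simp
qed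

lemma ne_rt_1_2_rt_m2[simp]: "\<not> five_equiv rt_1_2 rt_m2"
  proof
  assume h: "five_equiv rt_1_2 rt_m2"
  show False using key[of rt_1_2 rt_m2 "[False,False]" "[False,False]" "[False,True]" "[False,True]", OF h] by simp
qed

lemma ne_rt_1_2_rt_2[simp]: "\<not> five_equiv rt_1_2 rt_2"
  proof
  assume h: "five_equiv rt_1_2 rt_2"
  show False using key[of rt_1_2 rt_2 "[False,False]" "[False,False]" "[False,True]" "[False,True]", OF h] by simp
qed

lemma ne_rt_1_2_rt_2_5[simp]: "\<not> five_equiv rt_1_2 rt_2_5"
  proof
  assume h: "five_equiv rt_1_2 rt_2_5"
  show False using key[of rt_1_2 rt_2_5 "[False,False]" "[False,False]" "[False,True]" "[False,True]", OF h] by simp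
qed

lemma ne_rt_1_2_rt_5_2[simp]: "\<not> five_equiv rt_1_2 rt_5_2"
  proof
  assume h: "five_equiv rt_1_2 rt_5_2"
  show False using key[of rt_1_2 rt_5_2 "[False,False]" "[False,False]" "[False,True]" "[False,True]", OF h] by simp
qed

lemma ne_rt_1_2_rt_3_2[simp]: "\<not> five_equiv rt_1_2 rt_3_2"
  proof
  assume h: "five_equiv rt_1_2 rt_3_2"
  show False using key[of rt_1_2 rt_3_2 "[False,False]" "[False,False]" "[False,True]" "[False,True]", OF h] by simp
qed

lemma ne_rt_1_2_rt_m3_2[simp]: "\<not> five_equiv rt_1_2 rt_m3_2"
  proof
  assume h: "five_equiv rt_1_2 rt_m3_2"
  show False using key[of rt_1_2 rt_m3_2 "[False,False]" "[False,False]" "[False,True]" "[False,True]", OF h] by simp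
qed

lemma ne_rt_1_2_rt_m1_2[simp]: "\<not> five_equiv rt_1_2 rt_m1_2"
  proof
  assume h: "five_equiv rt_1_2 rt_m1_2"
  show False using key[of rt_1_2 rt_m1_2 "[False,False]" "[False,False]" "[False,True]" "[False,True]", OF h] by simp
qed

lemma ne_rt_m1_2_rt_inf[simp]: "\<not> five_equiv rt_m1_2 rt_inf"
  proof
  assume h: "five_equiv rt_m1_2 rt_inf"
  show False using key[of rt_m1_2 rt_inf "[False,False]" "[False,False]" "[False,True]" "[False,True]", OF h] by simp
qed

lemma ne_rt_m1_2_rt_0[simp]: "\<not> five_equiv rt_m1_2 rt_0"
  proof
  assume h: "five_equiv rt_m1_2 rt_0"
  show False using key[of rt_m1_2 rt_0 "[False,False]" "[False,False]" "[False,True]" "[False,True]", OF h] by simp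
qed

lemma ne_rt_m1_2_rt_m1[simp]: "\<not> five_equiv rt_m1_2 rt_m1"
  proof
  assume h: "five_equiv rt_m1_2 rt_m1"
  show False using key[of rt_m1_2 rt_m1 "[False,False]" "[False,False]" "[False,True]" "[False,True]", OF h] by simp
qed

lemma ne_rt_m1_2_rt_1[simp]: "\<not> five_equiv rt_m1_2 rt_1"
  proof
  assume h: "five_equiv rt_m1_2 rt_1"
  show False using key[of rt_m1_2 rt_1 "[False,False]" "[False,False]" "[False,True]" "[False,True]", OF h] by simp
qed

lemma ne_rt_m1_2_rt_m2[simp]: "\<not> five_equiv rt_m1_2 rt_m2"
  proof
  assume h: "five_equiv rt_m1_2 rt_m2"
  show False using key[of rt_m1_2 rt_m2 "[False,False]" "[False,False]" "[False,True]" "[False,True]", OF h] by simp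
qed

lemma ne_rt_m1_2_rt_2[simp]: "\<not> five_equiv rt_m1_2 rt_2"
  proof
  assume h: "five_equiv rt_m1_2 rt_2"
  show False using key[of rt_m1_2 rt_2 "[False,False]" "[False,False]" "[False,True]" "[False,True]", OF h] by simp
qed

lemma ne_rt_m1_2_rt_2_5[simp]: "\<not> five_equiv rt_m1_2 rt_2_5"
  proof
  assume h: "five_equiv rt_m1_2 rt_2_5"
  show False using key[of rt_m1_2 rt_2_5 "[False,False]" "[False,False]" "[False,True]" "[False,True]", OF h] by simp
qed

lemma ne_rt_m1_2_rt_5_2[simp]: "\<not> five_equiv rt_m1_2 rt_5_2"
  proof
  assume h: "five_equiv rt_m1_2 rt_5_2"
  show False using key[of rt_m1_2 rt_5_2 "[False,False]" "[False,False]" "[False,True]" "[False,True]", OF h] by simp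
qed

lemma ne_rt_m1_2_rt_3_2[simp]: "\<not> five_equiv rt_m1_2 rt_3_2"
  proof
  assume h: "five_equiv rt_m1_2 rt_3_2"
  show False using key[of rt_m1_2 rt_3_2 "[False,False]" "[False,False]" "[False,True]" "[False,True]", OF h] by simp
qed

lemma ne_rt_m1_2_rt_m3_2[simp]: "\<not> five_equiv rt_m1_2 rt_m3_2"
  proof
  assume h: "five_equiv rt_m1_2 rt_m3_2"
  show False using key[of rt_m1_2 rt_m3_2 "[False,False]" "[False,False]" "[False,True]" "[False,True]", OF h] by simp
qed

lemma ne_rt_m1_2_rt_1_2[simp]: "\<not> five_equiv rt_m1_2 rt_1_2"
  proof
  assume h: "five_equiv rt_m1_2 rt_1_2"
  show False using key[of rt_m1_2 rt_1_2 "[False,False]" "[False,False]" "[False,True]" "[False,True]", OF h] by simp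
qed

theorem corollary2p7:
  defines "L \<equiv> [rt_inf, rt_0, rt_m1, rt_1, rt_m2, rt_2, rt_2_5, rt_5_2, rt_3_2, rt_m3_2, rt_1_2, rt_m1_2]"
  shows "\<forall>i < length L. \<forall>j < length L. i \<noteq> j \<longrightarrow> \<not> five_equiv (L ! i) (L ! j)"
  unfolding L_def
  by (simp only: length_Cons list.size numeral_eq_Suc All_less_Suc add_0 add_Suc_right nth_Cons_0 nth_Cons_Suc
      not_less0 simp_thms) (simp add: ne_rt_inf_rt_0)

end
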